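(* Let $\mathcal{T}$ be a compact interval, $\boldsymbol{\phi}=(\phi_1,\dots,\phi_m)'$ a vector of linearly independent functions in $L^2(\mathcal{T})$, and let $\mathbf{X}(t)=\mathbf{A}'\boldsymbol{\phi}(t)$, $t\in\mathcal{T}$, be a rank $m$ $p$-variate process with separable covariance, mean $\boldsymbol{\mu}$ and covariance $\mathbf{K}(s,t)=\boldsymbol{\Sigma}^{\mathrm{row}}\kappa(s,t)$, where $\mathbf{A}=(\mathbf{a}_1,\dots,\mathbf{a}_p)\in\mathbb{R}^{m\times p}$ is a random coefficient matrix. Then: (i) $\mathbf{A}$ has a matrix-variate distribution with mean $\mathbf{M}_{\mathbf{A}}$ and covariance $\mathrm{Cov}(\mathrm{vec}(\mathbf{A}))=\boldsymbol{\Sigma}^{\mathrm{row}}\otimes\boldsymbol{\Sigma}^{\mathrm{col}}$ for some $\boldsymbol{\Sigma}^{\mathrm{col}}$ symmetric positive definite of size $m\times m$, such that for all $s,t\in\mathcal{T}$: $\mathbf{M}_{\mathbf{A}}'\boldsymbol{\phi}(t)=\boldsymbol{\mu}(t)$ and $\boldsymbol{\phi}'(s)\boldsymbol{\Sigma}^{\mathrm{col}}\boldsymbol{\phi}(t)=\kappa(s,t)$. (ii) $\mathrm{fMMD}^2(\mathbf{X};mp)=\mathrm{tr}\big((\boldsymbol{\Sigma}^{\mathrm{row}})^{-1}(\mathbf{A}-\mathbf{M}_{\mathbf{A}})'(\boldsymbol{\Sigma}^{\mathrm{col}})^{-1}(\mathbf{A}-\mathbf{M}_{\mathbf{A}})\big)=\mathrm{MMD}^2(\mathbf{A})$.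 (iii) If additionally $\mathbf{X}\sim\mathcal{MGP}(\boldsymbol{\mu},\boldsymbol{\Sigma}^{\mathrm{row}},\kappa)$ is a multivariate Gaussian process, then $\mathbf{A}\sim\mathcal{MN}(\mathbf{M}_{\mathbf{A}},\boldsymbol{\Sigma}^{\mathrm{col}},\boldsymbol{\Sigma}^{\mathrm{row}})$ with $\mathbf{M}_{\mathbf{A}}$ and the positive definite matrices $\boldsymbol{\Sigma}^{\mathrm{row}},\boldsymbol{\Sigma}^{\mathrm{col}}$ as in (i).
   Context: $\mathcal{H}=L^2(\mathcal{T})^p$ with inner product $\langle\mathbf{x},\mathbf{y}\rangle=\sum_j\int_{\mathcal{T}}x_jy_j$. The process has separable covariance: $\mathrm{Cov}(X_i(s),X_j(t))=\Sigma^{\mathrm{row}}_{ij}\kappa(s,t)$ with $\boldsymbol{\Sigma}^{\mathrm{row}}$ a $p\times p$ symmetric positive definite matrix and $\kappa$ a positive definite kernel; rank $m$ means the covariance operator of each component has at most $m$ nonzero eigenvalues. With the covariance operator $\mathcal{C}\mathbf{x}(s)=\int\mathbf{K}(s,t)\mathbf{x}(t)dt$ having orthonormal eigenfunctions $\boldsymbol{\psi}_k$ and nonincreasing eigenvalues $\pi_k$: $\mathrm{fMMD}^2(\mathbf{X};M)=\sum_{k=1}^M\pi_k^{-1}\langle\mathbf{X}-\boldsymbol{\mu},\boldsymbol{\psi}_k\rangle^2$. For an $m\times p$ random matrix with mean $\mathbf{M}$ and covariances $\boldsymbol{\Sigma}^{\mathrm{col}}$ ($m\times m$), $\boldsymbol{\Sigma}^{\mathrm{row}}$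 ($p\times p$), $\mathrm{MMD}^2(\mathbf{A})=\mathrm{tr}((\boldsymbol{\Sigma}^{\mathrm{row}})^{-1}(\mathbf{A}-\mathbf{M})'(\boldsymbol{\Sigma}^{\mathrm{col}})^{-1}(\mathbf{A}-\mathbf{M}))$. A random $a\times b$ matrix $\mathbf{Z}\sim\mathcal{MN}(\mathbf{M},\mathbf{U},\mathbf{V})$ ($\mathbf{U}$ $a\times a$, $\mathbf{V}$ $b\times b$) means $\mathrm{vec}(\mathbf{Z})\sim\mathcal{N}(\mathrm{vec}(\mathbf{M}),\mathbf{V}\otimes\mathbf{U})$, with vec stacking columns. $\mathbf{X}\sim\mathcal{MGP}(\boldsymbol{\mu},\boldsymbol{\Sigma}^{\mathrm{row}},\kappa)$ means that for every $t_1<\dots<t_q$ in $\mathcal{T}$, $(\mathbf{X}(t_1),\dots,\mathbf{X}(t_q))\sim\mathcal{MN}((\boldsymbol{\mu}(t_1),\dots,\boldsymbol{\mu}(t_q)),\boldsymbol{\Sigma}^{\mathrm{row}},[\kappa(t_k,t_l)]_{k,l})$. *)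

theory Defs
  imports "HOL-Probability.Probability"
begin

text \<open>A real function is in L2(T) (modulo a.e. equality, which is handled by stating
  all equalities in H almost everywhere on T).\<close>
definition sq_int :: "real set \<Rightarrow> (real \<Rightarrow> real) \<Rightarrow> bool" where
  "sq_int T f \<longleftrightarrow> set_borel_measurable lborel T f \<and> set_integrable lborel T (\<lambda>t. (f t)\<^sup>2)"

definition L2H :: "real set \<Rightarrow> (real \<Rightarrow> real^'p) \<Rightarrow> bool" where
  "L2H T x \<longleftrightarrow> (\<forall>j. sq_int T (\<lambda>t. x t $ j))"

definition Hip :: "real set \<Rightarrow> (real \<Rightarrow> real^'p) \<Rightarrow> (real \<Rightarrow> real^'p) \<Rightarrow> real" where
  "Hip T x y = (\<Sum>j\<in>UNIV. LINT t:T|lborel. x t $ j * y t $ j)"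

definition L2_lin_indep :: "real set \<Rightarrow> (real \<Rightarrow> real^'m) \<Rightarrow> bool" where
  "L2_lin_indep T \<phi> \<longleftrightarrow>
     (\<forall>c::real^'m. (AE t in lborel. t \<in> T \<longrightarrow> c \<bullet> \<phi> t = 0) \<longrightarrow> c = 0)"

definition Cop :: "real set \<Rightarrow> (real \<Rightarrow> real \<Rightarrow> real^'p^'p) \<Rightarrow> (real \<Rightarrow> real^'p) \<Rightarrow> real \<Rightarrow> real^'p" where
  "Cop T K x s = (LINT t:T|lborel. K s t *v x t)"

definition Kop :: "real set \<Rightarrow> (real \<Rightarrow> real \<Rightarrow> real) \<Rightarrow> (real \<Rightarrow> real) \<Rightarrow> real \<Rightarrow> real" where
  "Kop T k f s = (LINT t:T|lborel. k s t * f t)"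

definition op_rank_ge :: "real set \<Rightarrow> (real \<Rightarrow> real \<Rightarrow> real) \<Rightarrow> nat \<Rightarrow> bool" where
  "op_rank_ge T k n \<longleftrightarrow>
     (\<exists>f :: nat \<Rightarrow> real \<Rightarrow> real. (\<forall>i<n. sq_int T (f i)) \<and>
        (\<forall>c :: nat \<Rightarrow> real.
           (AE s in lborel. s \<in> T \<longrightarrow> (\<Sum>i<n. c i * Kop T k (f i) s) = 0) \<longrightarrow> (\<forall>i<n. c i = 0)))"

text \<open>Rank of the (self-adjoint) integral operator = dimension of its range
  = number of nonzero eigenvalues counted with multiplicity.\<close>
definition op_rank :: "real set \<Rightarrow> (real \<Rightarrow> real \<Rightarrow> real) \<Rightarrow> nat \<Rightarrow> bool" where
  "op_rank T k n \<longleftrightarrow> op_rank_ge T k n \<and> \<not> op_rank_ge T k (Suc n)"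

text \<open>(psi, pi) is an eigen-decomposition of the covariance operator C with kernel K:
  orthonormal eigenfunctions psi_k (k = 0,1,2,...; index 0 corresponds to the paper's
  index 1), nonincreasing eigenvalues pi_k, and complete in the sense that every element
  of H orthogonal to all psi_k lies in the kernel of C.\<close>
definition eigsys :: "real set \<Rightarrow> (real \<Rightarrow> real \<Rightarrow> real^'p^'p) \<Rightarrow> (nat \<Rightarrow> real \<Rightarrow> real^'p) \<Rightarrow> (nat \<Rightarrow> real) \<Rightarrow> bool" where
  "eigsys T K \<psi> \<pi> \<longleftrightarrow>
     (\<forall>k. L2H T (\<psi> k)) \<and>
     (\<forall>k l. Hip T (\<psi> k) (\<psi> l) = (if k = l then 1 else 0)) \<and>
     (\<forall>k. AE s in lborel. s \<in> T \<longrightarrow> Cop T K (\<psi> k) s = \<pi> k *\<^sub>R \<psi> k s) \<and>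
     (\<forall>k l. k \<le> l \<longrightarrow> \<pi> l \<le> \<pi> k) \<and>
     (\<forall>x. L2H T x \<longrightarrow> (\<forall>k. Hip T x (\<psi> k) = 0) \<longrightarrow>
           (AE s in lborel. s \<in> T \<longrightarrow> Cop T K x s = 0))"

definition fMMD2 :: "real set \<Rightarrow> (nat \<Rightarrow> real \<Rightarrow> real^'p) \<Rightarrow> (nat \<Rightarrow> real) \<Rightarrow>
    (real \<Rightarrow> real^'p) \<Rightarrow> (real \<Rightarrow> real^'p) \<Rightarrow> nat \<Rightarrow> real" where
  "fMMD2 T \<psi> \<pi> x \<mu> M = (\<Sum>k<M. inverse (\<pi> k) * (Hip T (\<lambda>t. x t - \<mu> t) (\<psi> k))\<^sup>2)"

definition MMD2 :: "real^'p^'m \<Rightarrow> real^'m^'m \<Rightarrow> real^'p^'p \<Rightarrow> real^'p^'m \<Rightarrow> real" where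
  "MMD2 Mn Scol Srow A =
     trace (matrix_inv Srow ** transpose (A - Mn) ** matrix_inv Scol ** (A - Mn))"

definition sym_posdef :: "real^'n^'n \<Rightarrow> bool" where
  "sym_posdef S \<longleftrightarrow> transpose S = S \<and> (\<forall>v. v \<noteq> 0 \<longrightarrow> 0 < v \<bullet> (S *v v))"

definition pd_kernel :: "real set \<Rightarrow> (real \<Rightarrow> real \<Rightarrow> real) \<Rightarrow> bool" where
  "pd_kernel T \<kappa> \<longleftrightarrow> (\<forall>s\<in>T. \<forall>t\<in>T. \<kappa> s t = \<kappa> t s) \<and>
     (\<forall>(q::nat) (t::nat \<Rightarrow> real) (c::nat \<Rightarrow> real). (\<forall>l<q. t l \<in> T) \<longrightarrow>
        0 \<le> (\<Sum>l<q. \<Sum>l'<q. c l * c l' * \<kappa> (t l) (t l')))"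

definition normal_rv :: "'a measure \<Rightarrow> ('a \<Rightarrow> real) \<Rightarrow> real \<Rightarrow> real \<Rightarrow> bool" where
  "normal_rv M Y m v \<longleftrightarrow>
     (0 < v \<and> distributed M lborel Y (normal_density m (sqrt v))) \<or>
     (v = 0 \<and> Y \<in> borel_measurable M \<and> (AE \<omega> in M. Y \<omega> = m))"

definition gaussian_vec :: "'a measure \<Rightarrow> ('a \<Rightarrow> 'i \<Rightarrow> real) \<Rightarrow> 'i set \<Rightarrow> ('i \<Rightarrow> real) \<Rightarrow> ('i \<Rightarrow> 'i \<Rightarrow> real) \<Rightarrow> bool" where
  "gaussian_vec M Y I m S \<longleftrightarrow>
     (\<forall>c :: 'i \<Rightarrow> real. normal_rv M (\<lambda>\<omega>. \<Sum>i\<in>I. c i * Y \<omega> i)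
        (\<Sum>i\<in>I. c i * m i) (\<Sum>i\<in>I. \<Sum>j\<in>I. c i * c j * S i j))"

text \<open>Matrix normal: Z (rows I, columns J) ~ MN(Mn, U, V) iff vec(Z) ~ N(vec(Mn), V \<otimes> U),
  i.e. Cov(Z_ij, Z_i'j') = V_jj' * U_ii'.\<close>
definition matrix_normal :: "'a measure \<Rightarrow> ('a \<Rightarrow> 'i \<Rightarrow> 'j \<Rightarrow> real) \<Rightarrow> 'i set \<Rightarrow> 'j set \<Rightarrow>
    ('i \<Rightarrow> 'j \<Rightarrow> real) \<Rightarrow> ('i \<Rightarrow> 'i \<Rightarrow> real) \<Rightarrow> ('j \<Rightarrow> 'j \<Rightarrow> real) \<Rightarrow> bool" where
  "matrix_normal M Z I J Mn U V \<longleftrightarrow>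
     gaussian_vec M (\<lambda>\<omega> (i, j). Z \<omega> i j) (I \<times> J) (\<lambda>(i, j). Mn i j)
       (\<lambda>(i, j) (i', j'). V j j' * U i i')"

definition is_MGP :: "'a measure \<Rightarrow> real set \<Rightarrow> ('a \<Rightarrow> real \<Rightarrow> real^'p) \<Rightarrow> (real \<Rightarrow> real^'p) \<Rightarrow>
    real^'p^'p \<Rightarrow> (real \<Rightarrow> real \<Rightarrow> real) \<Rightarrow> bool" where
  "is_MGP M T X \<mu> Srow \<kappa> \<longleftrightarrow>
     (\<forall>(q::nat) (t::nat \<Rightarrow> real). (\<forall>l<q. t l \<in> T) \<longrightarrow> (\<forall>l l'. l < l' \<and> l' < q \<longrightarrow> t l < t l') \<longrightarrow>
        matrix_normal M (\<lambda>\<omega> i l. X \<omega> (t l) $ i) UNIV {..<q} (\<lambda>i l. \<mu> (t l) $ i)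
          (\<lambda>i i'. Srow $ i $ i') (\<lambda>l l'. \<kappa> (t l) (t l')))"

end

theory Submission
  imports Defs
begin


definition sqi :: "'a measure \<Rightarrow> ('a \<Rightarrow> real) \<Rightarrow> bool" where
  "sqi N f \<longleftrightarrow> f \<in> borel_measurable N \<and> integrable N (\<lambda>x. (f x)\<^sup>2)"

lemma sqi_mult:
  assumes "sqi N f" "sqi N g"
  shows "integrable N (\<lambda>x. f x * g x)"
proof (rule Bochner_Integration.integrable_bound[where f="\<lambda>x. (f x)\<^sup>2 + (g x)\<^sup>2"])
  show "integrable N (\<lambda>x. (f x)\<^sup>2 + (g x)\<^sup>2)" using assms unfolding sqi_def by auto
  show "(\<lambda>x. f x * g x) \<in> borel_measurable N" using assms unfolding sqi_def by auto
  have "\<And>x. \<bar>f x * g x\<bar> \<le> (f x)\<^sup>2 + (g x)\<^sup>2"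
  proof -
    fix x
    have "0 \<le> (\<bar>f x\<bar> - \<bar>g x\<bar>)\<^sup>2" by simp
    hence "2 * \<bar>f x\<bar> * \<bar>g x\<bar> \<le> (f x)\<^sup>2 + (g x)\<^sup>2" by (simp add: power2_eq_square algebra_simps)
    moreover have "\<bar>f x * g x\<bar> = \<bar>f x\<bar> * \<bar>g x\<bar>" by (simp add: abs_mult)
    moreover have "0 \<le> \<bar>f x\<bar> * \<bar>g x\<bar>" by simp
    ultimately show "\<bar>f x * g x\<bar> \<le> (f x)\<^sup>2 + (g x)\<^sup>2" by linarith
  qed
  thus "AE x in N. norm (f x * g x) \<le> norm ((f x)\<^sup>2 + (g x)\<^sup>2)" by auto
qed

lemma sqi_add: "sqi N f \<Longrightarrow> sqi N g \<Longrightarrow> sqi N (\<lambda>x. f x + g x)"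
proof -
  assume a: "sqi N f" "sqi N g"
  have "integrable N (\<lambda>x. (f x)\<^sup>2 + 2 * (f x * g x) + (g x)\<^sup>2)"
    using a sqi_mult[OF a] unfolding sqi_def by auto
  moreover have "(\<lambda>x. (f x)\<^sup>2 + 2 * (f x * g x) + (g x)\<^sup>2) = (\<lambda>x. (f x + g x)\<^sup>2)"
    by (simp add: power2_eq_square algebra_simps)
  ultimately show ?thesis using a unfolding sqi_def by auto
qed

lemma sqi_cmult: "sqi N f \<Longrightarrow> sqi N (\<lambda>x. c * f x)"
  unfolding sqi_def by (auto simp: power_mult_distrib)

lemma sqi_zero: "sqi N (\<lambda>x. 0)"
  unfolding sqi_def by auto

lemma sqi_sum: "finite I \<Longrightarrow> (\<And>i. i \<in> I \<Longrightarrow> sqi N (f i)) \<Longrightarrow> sqi N (\<lambda>x. \<Sum>i\<in>I. f i x)"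
proof (induction I rule: finite_induct)
  case empty thus ?case by (simp add: sqi_zero)
next
  case (insert i I) thus ?case by (simp add: sqi_add)
qed

lemma sqi_lincomb: "finite I \<Longrightarrow> (\<And>i. i \<in> I \<Longrightarrow> sqi N (f i)) \<Longrightarrow> sqi N (\<lambda>x. \<Sum>i\<in>I. c i * f i x)"
  by (rule sqi_sum) (auto intro: sqi_cmult)

lemma sqi_cong: "(\<And>x. x \<in> space N \<Longrightarrow> f x = g x) \<Longrightarrow> sqi N f \<Longrightarrow> sqi N g"
  unfolding sqi_def
  by (metis (no_types, lifting) Bochner_Integration.integrable_cong measurable_cong)

lemma (in finite_measure) sqi_const: "sqi M (\<lambda>x. c)"
  unfolding sqi_def by auto

lemma (in finite_measure) sqi_integrable: "sqi M f \<Longrightarrow> integrable M f"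
  using sqi_mult[of M f "\<lambda>x. 1"] sqi_const by simp

lemma int_sum_prod:
  assumes "finite I" "\<And>i. i \<in> I \<Longrightarrow> sqi N (f i)" "sqi N g"
  shows "integral\<^sup>L N (\<lambda>x. (\<Sum>i\<in>I. c i * f i x) * g x) = (\<Sum>i\<in>I. c i * integral\<^sup>L N (\<lambda>x. f i x * g x))"
proof -
  have "integral\<^sup>L N (\<lambda>x. (\<Sum>i\<in>I. c i * f i x) * g x) = integral\<^sup>L N (\<lambda>x. \<Sum>i\<in>I. c i * (f i x * g x))"
    by (simp add: sum_distrib_right mult.assoc)
  also have "\<dots> = (\<Sum>i\<in>I. integral\<^sup>L N (\<lambda>x. c i * (f i x * g x)))"
    by (rule Bochner_Integration.integral_sum) (use assms sqi_mult in auto)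
  also have "\<dots> = (\<Sum>i\<in>I. c i * integral\<^sup>L N (\<lambda>x. f i x * g x))"
    by simp
  finally show ?thesis .
qed

lemma int_sum_prod2:
  assumes "finite I" "finite J" "\<And>i. i \<in> I \<Longrightarrow> sqi N (f i)" "\<And>j. j \<in> J \<Longrightarrow> sqi N (g j)"
  shows "integral\<^sup>L N (\<lambda>x. (\<Sum>i\<in>I. c i * f i x) * (\<Sum>j\<in>J. d j * g j x)) =
     (\<Sum>i\<in>I. \<Sum>j\<in>J. c i * d j * integral\<^sup>L N (\<lambda>x. f i x * g j x))"
proof -
  have "integral\<^sup>L N (\<lambda>x. (\<Sum>i\<in>I. c i * f i x) * (\<Sum>j\<in>J. d j * g j x))
     = (\<Sum>i\<in>I. c i * integral\<^sup>L N (\<lambda>x. f i x * (\<Sum>j\<in>J. d j * g j x)))"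
    by (rule int_sum_prod) (use assms in \<open>auto intro: sqi_lincomb\<close>)
  also have "\<dots> = (\<Sum>i\<in>I. c i * (\<Sum>j\<in>J. d j * integral\<^sup>L N (\<lambda>x. g j x * f i x)))"
  proof (rule sum.cong[OF refl])
    fix i assume "i \<in> I"
    have "integral\<^sup>L N (\<lambda>x. f i x * (\<Sum>j\<in>J. d j * g j x)) = integral\<^sup>L N (\<lambda>x. (\<Sum>j\<in>J. d j * g j x) * f i x)"
      by (simp add: mult.commute)
    also have "\<dots> = (\<Sum>j\<in>J. d j * integral\<^sup>L N (\<lambda>x. g j x * f i x))"
      by (rule int_sum_prod) (use assms \<open>i \<in> I\<close> in auto)
    finally show "c i * integral\<^sup>L N (\<lambda>x. f i x * (\<Sum>j\<in>J. d j * g j x)) = c i * (\<Sum>j\<in>J. d j * integral\<^sup>L N (\<lambda>x. g j x * f i x))" by simp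
  qed
  also have "\<dots> = (\<Sum>i\<in>I. \<Sum>j\<in>J. c i * d j * integral\<^sup>L N (\<lambda>x. f i x * g j x))"
    by (simp add: sum_distrib_left mult.commute mult.left_commute mult.assoc)
  finally show ?thesis .
qed


lemma minv:
  fixes A :: "real^'n^'n"
  assumes "invertible A"
  shows "A ** matrix_inv A = mat 1" "matrix_inv A ** A = mat 1"
proof -
  have "\<exists>A'. A ** A' = mat 1 \<and> A' ** A = mat 1" using assms unfolding invertible_def by auto
  hence "A ** matrix_inv A = mat 1 \<and> matrix_inv A ** A = mat 1"
    unfolding matrix_inv_def by (rule someI_ex)
  thus "A ** matrix_inv A = mat 1" "matrix_inv A ** A = mat 1" by auto
qed

lemma posdef_invertible:
  fixes S :: "real^'n^'n"
  assumes "sym_posdef S"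
  shows "invertible S"
proof -
  have "\<forall>x. S *v x = 0 \<longrightarrow> x = 0"
  proof (intro allI impI)
    fix x assume "S *v x = 0"
    hence "x \<bullet> (S *v x) = 0" by simp
    thus "x = 0" using assms unfolding sym_posdef_def by (metis less_irrefl)
  qed
  thus ?thesis using matrix_left_invertible_ker[of S] invertible_left_inverse[of S] by auto
qed

lemma posdef_inv_sym:
  fixes S :: "real^'n^'n"
  assumes "sym_posdef S"
  shows "transpose (matrix_inv S) = matrix_inv S"
proof -
  have inv: "S ** matrix_inv S = mat 1" "matrix_inv S ** S = mat 1"
    using minv posdef_invertible assms by blast+
  have St: "transpose S = S" using assms unfolding sym_posdef_def by auto
  have "transpose (S ** matrix_inv S) = mat 1" using inv by (simp add: transpose_mat)
  hence "transpose (matrix_inv S) ** S = mat 1" by (simp add: matrix_transpose_mul St)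
  have "transpose (matrix_inv S) = transpose (matrix_inv S) ** (S ** matrix_inv S)"
    by (simp add: inv matrix_mul_rid)
  also have "\<dots> = (transpose (matrix_inv S) ** S) ** matrix_inv S" by (simp add: matrix_mul_assoc)
  also have "\<dots> = matrix_inv S" using \<open>transpose (matrix_inv S) ** S = mat 1\<close> by (simp add: matrix_mul_lid)
  finally show ?thesis .
qed

lemma frob_left:
  fixes P :: "real^'m^'m" and Y R :: "real^'p^'m"
  shows "(P ** Y) \<bullet> R = Y \<bullet> (transpose P ** R)"
proof -
  have "(P ** Y) \<bullet> R = (\<Sum>k\<in>UNIV. \<Sum>j\<in>UNIV. \<Sum>i\<in>UNIV. P$k$i * Y$i$j * R$k$j)"
    unfolding inner_vec_def matrix_matrix_mult_def by (simp add: sum_distrib_right)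
  also have "\<dots> = (\<Sum>k\<in>UNIV. \<Sum>i\<in>UNIV. \<Sum>j\<in>UNIV. P$k$i * Y$i$j * R$k$j)"
    by (rule sum.cong[OF refl], rule sum.swap)
  also have "\<dots> = (\<Sum>i\<in>UNIV. \<Sum>k\<in>UNIV. \<Sum>j\<in>UNIV. P$k$i * Y$i$j * R$k$j)"
    by (rule sum.swap)
  also have "\<dots> = (\<Sum>i\<in>UNIV. \<Sum>j\<in>UNIV. \<Sum>k\<in>UNIV. P$k$i * Y$i$j * R$k$j)"
    by (rule sum.cong[OF refl], rule sum.swap)
  also have "\<dots> = Y \<bullet> (transpose P ** R)"
    unfolding inner_vec_def matrix_matrix_mult_def transpose_def
    by (simp add: sum_distrib_left mult.commute mult.left_commute)
  finally show ?thesis .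
qed

lemma frob_right:
  fixes Q :: "real^'p^'p" and Y R :: "real^'p^'m"
  shows "(Y ** Q) \<bullet> R = Y \<bullet> (R ** transpose Q)"
proof -
  have "(Y ** Q) \<bullet> R = (\<Sum>k\<in>UNIV. \<Sum>j\<in>UNIV. \<Sum>i\<in>UNIV. Y$k$i * Q$i$j * R$k$j)"
    unfolding inner_vec_def matrix_matrix_mult_def by (simp add: sum_distrib_right)
  also have "\<dots> = (\<Sum>k\<in>UNIV. \<Sum>i\<in>UNIV. \<Sum>j\<in>UNIV. Y$k$i * Q$i$j * R$k$j)"
    by (rule sum.cong[OF refl], rule sum.swap)
  also have "\<dots> = Y \<bullet> (R ** transpose Q)"
    unfolding inner_vec_def matrix_matrix_mult_def transpose_def
    by (simp add: sum_distrib_left mult.commute mult.left_commute)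
  finally show ?thesis .
qed

lemma frob_trace:
  fixes P Q :: "real^'p^'m"
  shows "trace (transpose P ** Q) = P \<bullet> Q"
  unfolding inner_vec_def matrix_matrix_mult_def transpose_def trace_def
  apply simp
  apply (subst sum.swap)
  apply simp
  done

lemma inner_mat_sum:
  fixes P Q :: "real^'p^'m"
  shows "P \<bullet> Q = (\<Sum>k\<in>UNIV. \<Sum>j\<in>UNIV. P$k$j * Q$k$j)"
  unfolding inner_vec_def by simp


lemma span_image_sum:
  fixes f :: "nat \<Rightarrow> 'a::euclidean_space"
  assumes "x \<in> span (f ` {..<q})"
  shows "\<exists>w. x = (\<Sum>l<q. w l *\<^sub>R f l)"
proof -
  let ?P = "{x. \<exists>w. x = (\<Sum>l<q. w l *\<^sub>R f l)}"
  have sub: "subspace ?P"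
    unfolding subspace_def
  proof (intro conjI ballI allI)
    show "0 \<in> ?P" by (rule CollectI, rule exI[of _ "\<lambda>_. 0"]) simp
  next
    fix x y assume "x \<in> ?P" "y \<in> ?P"
    then obtain w v where "x = (\<Sum>l<q. w l *\<^sub>R f l)" "y = (\<Sum>l<q. v l *\<^sub>R f l)" by auto
    hence "x + y = (\<Sum>l<q. (w l + v l) *\<^sub>R f l)" by (simp add: scaleR_add_left sum.distrib)
    thus "x + y \<in> ?P" unfolding mem_Collect_eq by (rule exI[of _ "\<lambda>l. w l + v l"])
  next
    fix c :: real and x assume "x \<in> ?P"
    then obtain w where "x = (\<Sum>l<q. w l *\<^sub>R f l)" by auto
    hence "c *\<^sub>R x = (\<Sum>l<q. (c * w l) *\<^sub>R f l)" by (simp add: scaleR_sum_right)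
    thus "c *\<^sub>R x \<in> ?P" unfolding mem_Collect_eq by (rule exI[of _ "\<lambda>l. c * w l"])
  qed
  have "f ` {..<q} \<subseteq> ?P"
  proof
    fix y assume "y \<in> f ` {..<q}"
    then obtain i where i: "i < q" "y = f i" by auto
    have "y = (\<Sum>l<q. (if l = i then 1 else 0) *\<^sub>R f l)"
    proof -
      have "(\<Sum>l<q. (if l = i then 1 else 0) *\<^sub>R f l) = (\<Sum>l<q. if l = i then f l else 0)"
        by (rule sum.cong) auto
      thus ?thesis using i by (simp add: sum.delta)
    qed
    thus "y \<in> ?P" unfolding mem_Collect_eq by (rule exI[of _ "\<lambda>l. if l = i then 1 else 0"])
  qed
  hence "span (f ` {..<q}) \<subseteq> ?P" using sub by (rule span_minimal)
  thus ?thesis using assms by auto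
qed

locale base =
  fixes M :: "'w measure"
    and a b :: real
    and \<phi> :: "real \<Rightarrow> real^'m::finite"
    and A :: "'w \<Rightarrow> real^'p::finite^'m"
    and X :: "'w \<Rightarrow> real \<Rightarrow> real^'p"
    and \<mu> :: "real \<Rightarrow> real^'p"
    and Srow :: "real^'p^'p"
    and \<kappa> :: "real \<Rightarrow> real \<Rightarrow> real"
  assumes prob: "prob_space M"
    and ab: "a < b"
    and phi_L2: "\<forall>k. sq_int {a..b} (\<lambda>t. \<phi> t $ k)"
    and phi_indep: "L2_lin_indep {a..b} \<phi>"
    and A_rv: "\<forall>k j. (\<lambda>\<omega>. A \<omega> $ k $ j) \<in> borel_measurable M"
    and X_def: "\<forall>\<omega>\<in>space M. \<forall>t\<in>{a..b}. X \<omega> t = transpose (A \<omega>) *v \<phi> t"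
    and X_L2: "\<forall>j. \<forall>t\<in>{a..b}. integrable M (\<lambda>\<omega>. (X \<omega> t $ j)\<^sup>2)"
    and mean: "\<forall>j. \<forall>t\<in>{a..b}. (\<integral>\<omega>. X \<omega> t $ j \<partial>M) = \<mu> t $ j"
    and Srow_pd: "sym_posdef Srow"
    and kappa_pd: "pd_kernel {a..b} \<kappa>"
    and cov: "\<forall>i j. \<forall>s\<in>{a..b}. \<forall>t\<in>{a..b}.
               (\<integral>\<omega>. (X \<omega> s $ i - \<mu> s $ i) * (X \<omega> t $ j - \<mu> t $ j) \<partial>M) = Srow $ i $ j * \<kappa> s t"
begin

lemma span_phi: "span (\<phi> ` {a..b}) = UNIV"
proof (rule ccontr)
  assume ne: "span (\<phi> ` {a..b}) \<noteq> UNIV"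
  have "dim (\<phi> ` {a..b}) \<le> DIM(real^'m)" by (rule dim_subset_UNIV)
  moreover have "dim (\<phi> ` {a..b}) \<noteq> DIM(real^'m)" using ne dim_eq_full by blast
  ultimately have dl: "dim (\<phi> ` {a..b}) < DIM(real^'m)" by linarith
  obtain c :: "real^'m" where c: "c \<noteq> 0" "\<And>y. y \<in> span (\<phi> ` {a..b}) \<Longrightarrow> orthogonal c y"
    using orthogonal_to_subspace_exists[OF dl] by metis
  have "\<forall>t\<in>{a..b}. c \<bullet> \<phi> t = 0"
    using c(2) span_base unfolding orthogonal_def by blast
  hence "AE t in lborel. t \<in> {a..b} \<longrightarrow> c \<bullet> \<phi> t = 0" by auto
  hence "c = 0" using phi_indep unfolding L2_lin_indep_def by blast
  thus False using c(1) by simp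
qed

lemma points:
  "\<exists>(q::nat) t W. (\<forall>l<q. t l \<in> {a..b}) \<and> (\<forall>l l'. l < l' \<and> l' < q \<longrightarrow> t l < t l') \<and>
     (\<forall>k. (\<Sum>l<q. W k l *\<^sub>R \<phi> (t l)) = axis k 1)"
proof -
  obtain B where B: "B \<subseteq> \<phi> ` {a..b}" "independent B" "\<phi> ` {a..b} \<subseteq> span B"
    by (rule maximal_independent_subset)
  have finB: "finite B" using B(2) by (rule finiteI_independent)
  define S where "S = inv_into {a..b} \<phi> ` B"
  have finS: "finite S" unfolding S_def using finB by simp
  have ST: "S \<subseteq> {a..b}" unfolding S_def using B(1) by (auto intro: inv_into_into)
  have phiS: "\<phi> ` S = B" unfolding S_def using B(1) by (rule image_inv_into_cancel[OF refl])
  have spanB: "span B = UNIV" using B(3) span_phi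
    by (metis span_minimal subspace_span top.extremum_uniqueI)
  define xs where "xs = sorted_list_of_set S"
  have xs: "sorted_wrt (<) xs" "set xs = S" using finS unfolding xs_def by auto
  define q where "q = length xs"
  define t where "t = (\<lambda>l. xs ! l)"
  have img: "(\<lambda>l. \<phi> (t l)) ` {..<q} = B"
  proof -
    have "t ` {..<q} = S" unfolding t_def q_def using xs(2) by (auto simp: set_conv_nth)
    thus ?thesis using phiS by (auto simp: image_image[symmetric])
  qed
  have "\<forall>k. \<exists>w. axis k 1 = (\<Sum>l<q. w l *\<^sub>R \<phi> (t l))"
    using span_image_sum[of _ "\<lambda>l. \<phi> (t l)" q] img spanB by auto
  then obtain W where W: "\<forall>k. axis k 1 = (\<Sum>l<q. W k l *\<^sub>R \<phi> (t l))" by metis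
  have "\<forall>l<q. t l \<in> {a..b}" using ST xs(2) unfolding t_def q_def by (metis nth_mem subsetD)
  moreover have "\<forall>l l'. l < l' \<and> l' < q \<longrightarrow> t l < t l'"
    using xs(1) unfolding t_def q_def by (auto intro: sorted_wrt_nth_less)
  ultimately have "(\<forall>l<q. t l \<in> {a..b}) \<and> (\<forall>l l'. l < l' \<and> l' < q \<longrightarrow> t l < t l') \<and>
     (\<forall>k. (\<Sum>l<q. W k l *\<^sub>R \<phi> (t l)) = axis k 1)" using W by simp
  thus ?thesis by blast
qed

end


lemma vsum_nth: "(\<Sum>l\<in>S. f l) $ i = (\<Sum>l\<in>S. f l $ i)"
  by (induct S rule: infinite_finite_induct) auto

lemma axis_nth_if: "axis k (1::real) $ k' = (if k' = k then 1 else 0)"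
  by (simp add: axis_def)

lemma sum_axis: "(\<Sum>i\<in>UNIV. axis j (1::real) $ i * f i) = f j" "(\<Sum>i\<in>UNIV. f i * axis j (1::real) $ i) = f j"
proof -
  have "(\<Sum>i\<in>UNIV. axis j (1::real) $ i * f i) = (\<Sum>i\<in>UNIV. if i = j then f i else 0)"
    by (rule sum.cong) (auto simp: axis_nth_if)
  thus "(\<Sum>i\<in>UNIV. axis j (1::real) $ i * f i) = f j" by simp
  have "(\<Sum>i\<in>UNIV. f i * axis j (1::real) $ i) = (\<Sum>i\<in>UNIV. if i = j then f i else 0)"
    by (rule sum.cong) (auto simp: axis_nth_if)
  thus "(\<Sum>i\<in>UNIV. f i * axis j (1::real) $ i) = f j" by simp
qed

lemma sqi_diff: "sqi N f \<Longrightarrow> sqi N g \<Longrightarrow> sqi N (\<lambda>x. f x - g x)"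
  using sqi_add[of N f "\<lambda>x. (-1) * g x"] sqi_cmult[of N g "-1"] by simp

lemma posdef_diag:
  fixes S :: "real^'n^'n"
  assumes "sym_posdef S" shows "0 < S $ j $ j"
proof -
  have "0 < axis j 1 \<bullet> (S *v axis j 1)" using assms unfolding sym_posdef_def
    by (metis axis_nth zero_index zero_neq_one)
  also have "axis j 1 \<bullet> (S *v axis j 1) = S $ j $ j"
    by (simp add: inner_vec_def matrix_vector_mult_def sum_axis)
  finally show ?thesis .
qed

sublocale base \<subseteq> P: prob_space M by (rule prob)

context base begin

lemma X_comp: "\<omega> \<in> space M \<Longrightarrow> t \<in> {a..b} \<Longrightarrow> X \<omega> t $ j = (\<Sum>k\<in>UNIV. A \<omega> $ k $ j * \<phi> t $ k)"
  using X_def by (simp add: matrix_vector_mult_def transpose_def)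

lemma sqi_X: "t \<in> {a..b} \<Longrightarrow> sqi M (\<lambda>\<omega>. X \<omega> t $ j)"
proof -
  assume t: "t \<in> {a..b}"
  have "(\<lambda>\<omega>. (\<Sum>k\<in>UNIV. A \<omega> $ k $ j * \<phi> t $ k)) \<in> borel_measurable M"
    by (intro borel_measurable_sum borel_measurable_times) (use A_rv in auto)
  hence "(\<lambda>\<omega>. X \<omega> t $ j) \<in> borel_measurable M"
    using measurable_cong[of M "\<lambda>\<omega>. X \<omega> t $ j"] X_comp t by simp
  thus ?thesis unfolding sqi_def using X_L2 t by auto
qed

lemma sqi_Xc: "t \<in> {a..b} \<Longrightarrow> sqi M (\<lambda>\<omega>. X \<omega> t $ j - \<mu> t $ j)"
  by (rule sqi_diff[OF sqi_X P.sqi_const])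


end

locale pts = base M a b \<phi> A X \<mu> Srow \<kappa>
  for M :: "'w measure"
    and a b :: real
    and \<phi> :: "real \<Rightarrow> real^'m::finite"
    and A :: "'w \<Rightarrow> real^'p::finite^'m"
    and X :: "'w \<Rightarrow> real \<Rightarrow> real^'p"
    and \<mu> :: "real \<Rightarrow> real^'p"
    and Srow :: "real^'p^'p"
    and \<kappa> :: "real \<Rightarrow> real \<Rightarrow> real" +
  fixes q :: nat and tp :: "nat \<Rightarrow> real" and W :: "'m::finite \<Rightarrow> nat \<Rightarrow> real"
  assumes tp_in: "\<forall>l<q. tp l \<in> {a..b}"
    and tp_mono: "\<forall>l l'. l < l' \<and> l' < q \<longrightarrow> tp l < tp l'"
    and W_ax: "\<forall>k. (\<Sum>l<q. W k l *\<^sub>R \<phi> (tp l)) = axis k 1"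
begin

definition MA :: "real^'p^'m" where
  "MA = (\<chi> k (j::'p). \<Sum>l<q. W k l * \<mu> (tp l) $ j)"

definition Scol :: "real^'m^'m" where
  "Scol = (\<chi> k k'. \<Sum>l<q. \<Sum>l'<q. W k l * W k' l' * \<kappa> (tp l) (tp l'))"

definition Yc :: "nat \<Rightarrow> 'p \<Rightarrow> 'w \<Rightarrow> real" where
  "Yc l j \<omega> = X \<omega> (tp l) $ j - \<mu> (tp l) $ j"

definition D :: "'m \<Rightarrow> 'p \<Rightarrow> 'w \<Rightarrow> real" where
  "D k j \<omega> = A \<omega> $ k $ j - MA $ k $ j"

lemma A_repr: "\<omega> \<in> space M \<Longrightarrow> A \<omega> $ k $ j = (\<Sum>l<q. W k l * X \<omega> (tp l) $ j)"
proof -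
  assume w: "\<omega> \<in> space M"
  have "(\<Sum>l<q. W k l * X \<omega> (tp l) $ j) = (\<Sum>l<q. W k l * (\<Sum>k'\<in>UNIV. A \<omega> $ k' $ j * \<phi> (tp l) $ k'))"
    using X_comp w tp_in by simp
  also have "\<dots> = (\<Sum>l<q. \<Sum>k'\<in>UNIV. A \<omega> $ k' $ j * (W k l * \<phi> (tp l) $ k'))"
    by (simp add: sum_distrib_left mult.left_commute)
  also have "\<dots> = (\<Sum>k'\<in>UNIV. \<Sum>l<q. A \<omega> $ k' $ j * (W k l * \<phi> (tp l) $ k'))"
    by (rule sum.swap)
  also have "\<dots> = (\<Sum>k'\<in>UNIV. A \<omega> $ k' $ j * (\<Sum>l<q. W k l * \<phi> (tp l) $ k'))"
    by (simp add: sum_distrib_left)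
  also have "\<dots> = (\<Sum>k'\<in>UNIV. A \<omega> $ k' $ j * (axis k 1 $ k'))"
  proof -
    have "(\<Sum>l<q. W k l * \<phi> (tp l) $ k') = axis k 1 $ k'" for k'
    proof -
      have "(\<Sum>l<q. W k l * \<phi> (tp l) $ k') = (\<Sum>l<q. W k l *\<^sub>R \<phi> (tp l)) $ k'" by (simp add: vsum_nth)
      also have "\<dots> = axis k 1 $ k'" using W_ax by simp
      finally show ?thesis .
    qed
    thus ?thesis by simp
  qed
  also have "\<dots> = A \<omega> $ k $ j" by (simp add: sum_axis)
  finally show ?thesis by simp
qed

lemma sqi_Yc: "l < q \<Longrightarrow> sqi M (Yc l j)"
  unfolding Yc_def using sqi_Xc tp_in by auto

lemma D_repr: "\<omega> \<in> space M \<Longrightarrow> D k j \<omega> = (\<Sum>l<q. W k l * Yc l j \<omega>)"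
  unfolding D_def Yc_def MA_def using A_repr
  by (simp add: right_diff_distrib sum_subtractf)

lemma sqi_D: "sqi M (D k j)"
  by (rule sqi_cong[OF D_repr[symmetric]]) (auto intro!: sqi_lincomb sqi_Yc)

lemma sqi_A: "sqi M (\<lambda>\<omega>. A \<omega> $ k $ j)"
proof -
  have "sqi M (\<lambda>\<omega>. D k j \<omega> + MA $ k $ j)" by (rule sqi_add[OF sqi_D P.sqi_const])
  thus ?thesis unfolding D_def by simp
qed

lemma int_A: "(\<integral>\<omega>. A \<omega> $ k $ j \<partial>M) = MA $ k $ j"
proof -
  have "(\<integral>\<omega>. A \<omega> $ k $ j \<partial>M) = (\<integral>\<omega>. (\<Sum>l<q. W k l * X \<omega> (tp l) $ j) \<partial>M)"
    by (rule Bochner_Integration.integral_cong[OF refl]) (rule A_repr)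
  also have "\<dots> = (\<Sum>l<q. (\<integral>\<omega>. W k l * X \<omega> (tp l) $ j \<partial>M))"
    by (rule Bochner_Integration.integral_sum) (use tp_in sqi_X P.sqi_integrable in auto)
  also have "\<dots> = (\<Sum>l<q. W k l * \<mu> (tp l) $ j)"
    using mean tp_in by simp
  finally show ?thesis unfolding MA_def by simp
qed

lemma cov_Yc: "l < q \<Longrightarrow> l' < q \<Longrightarrow> (\<integral>\<omega>. Yc l j \<omega> * Yc l' j' \<omega> \<partial>M) = Srow $ j $ j' * \<kappa> (tp l) (tp l')"
  unfolding Yc_def using cov tp_in by simp

lemma cov_D: "(\<integral>\<omega>. D k j \<omega> * D k' j' \<omega> \<partial>M) = Srow $ j $ j' * Scol $ k $ k'"
proof -
  have "(\<integral>\<omega>. D k j \<omega> * D k' j' \<omega> \<partial>M) = (\<integral>\<omega>. (\<Sum>l<q. W k l * Yc l j \<omega>) * (\<Sum>l'<q. W k' l' * Yc l' j' \<omega>) \<partial>M)"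
    by (rule Bochner_Integration.integral_cong[OF refl]) (simp add: D_repr)
  also have "\<dots> = (\<Sum>l<q. \<Sum>l'<q. W k l * W k' l' * (\<integral>\<omega>. Yc l j \<omega> * Yc l' j' \<omega> \<partial>M))"
    by (rule int_sum_prod2) (auto intro: sqi_Yc)
  also have "\<dots> = (\<Sum>l<q. \<Sum>l'<q. W k l * W k' l' * (Srow $ j $ j' * \<kappa> (tp l) (tp l')))"
    by (simp add: cov_Yc)
  also have "\<dots> = Srow $ j $ j' * Scol $ k $ k'"
    unfolding Scol_def by (simp add: sum_distrib_left mult.commute mult.left_commute)
  finally show ?thesis .
qed

lemma mu_eq: "t \<in> {a..b} \<Longrightarrow> transpose MA *v \<phi> t = \<mu> t"
proof -
  assume t: "t \<in> {a..b}"
  have "(transpose MA *v \<phi> t) $ j = \<mu> t $ j" for j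
  proof -
    have "\<mu> t $ j = (\<integral>\<omega>. X \<omega> t $ j \<partial>M)" using mean t by simp
    also have "\<dots> = (\<integral>\<omega>. (\<Sum>k\<in>UNIV. A \<omega> $ k $ j * \<phi> t $ k) \<partial>M)"
      by (rule Bochner_Integration.integral_cong[OF refl]) (rule X_comp[OF _ t])
    also have "\<dots> = (\<Sum>k\<in>UNIV. (\<integral>\<omega>. A \<omega> $ k $ j * \<phi> t $ k \<partial>M))"
      by (rule Bochner_Integration.integral_sum) (use sqi_A P.sqi_integrable in auto)
    also have "\<dots> = (\<Sum>k\<in>UNIV. MA $ k $ j * \<phi> t $ k)"
      using int_A by simp
    finally show ?thesis by (simp add: matrix_vector_mult_def transpose_def)
  qed
  thus ?thesis by (simp add: vec_eq_iff)
qed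

end


lemma sum_pair: "(\<Sum>x\<in>(UNIV::('a::finite \<times> 'b::finite) set). f x) = (\<Sum>a\<in>UNIV. \<Sum>b\<in>UNIV. f (a,b))"
proof -
  have "(\<Sum>a\<in>UNIV. \<Sum>b\<in>UNIV. f (a,b)) = (\<Sum>(a,b)\<in>UNIV \<times> UNIV. f (a,b))"
    by (rule sum.cartesian_product)
  thus ?thesis by simp
qed

context pts begin

lemma Srow_sym: "Srow $ i $ j = Srow $ j $ i"
  using Srow_pd unfolding sym_posdef_def by (metis transpose_def vec_lambda_beta)

lemma Xc_repr: "\<omega> \<in> space M \<Longrightarrow> s \<in> {a..b} \<Longrightarrow> X \<omega> s $ j - \<mu> s $ j = (\<Sum>k\<in>UNIV. \<phi> s $ k * D k j \<omega>)"
proof -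
  assume w: "\<omega> \<in> space M" and s: "s \<in> {a..b}"
  have "\<mu> s $ j = (transpose MA *v \<phi> s) $ j" using mu_eq s by simp
  also have "\<dots> = (\<Sum>k\<in>UNIV. MA $ k $ j * \<phi> s $ k)" by (simp add: matrix_vector_mult_def transpose_def)
  finally have "X \<omega> s $ j - \<mu> s $ j = (\<Sum>k\<in>UNIV. A \<omega> $ k $ j * \<phi> s $ k) - (\<Sum>k\<in>UNIV. MA $ k $ j * \<phi> s $ k)"
    using X_comp[OF w s] by simp
  also have "\<dots> = (\<Sum>k\<in>UNIV. \<phi> s $ k * D k j \<omega>)"
    unfolding D_def by (simp add: sum_subtractf[symmetric] algebra_simps)
  finally show ?thesis .
qed

lemma Srow_diag_pos: "0 < Srow $ j $ j"
  by (rule posdef_diag[OF Srow_pd])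

lemma kappa_eq: "s \<in> {a..b} \<Longrightarrow> t \<in> {a..b} \<Longrightarrow> \<phi> s \<bullet> (Scol *v \<phi> t) = \<kappa> s t"
proof -
  assume s: "s \<in> {a..b}" and t: "t \<in> {a..b}"
  fix j :: 'p
  have "Srow $ j $ j * \<kappa> s t = (\<integral>\<omega>. (X \<omega> s $ j - \<mu> s $ j) * (X \<omega> t $ j - \<mu> t $ j) \<partial>M)"
    using cov s t by simp
  also have "\<dots> = (\<integral>\<omega>. (\<Sum>k\<in>UNIV. \<phi> s $ k * D k j \<omega>) * (\<Sum>k'\<in>UNIV. \<phi> t $ k' * D k' j \<omega>) \<partial>M)"
  proof (rule Bochner_Integration.integral_cong[OF refl])
    fix \<omega> assume w: "\<omega> \<in> space M"
    show "(X \<omega> s $ j - \<mu> s $ j) * (X \<omega> t $ j - \<mu> t $ j) = (\<Sum>k\<in>UNIV. \<phi> s $ k * D k j \<omega>) * (\<Sum>k'\<in>UNIV. \<phi> t $ k' * D k' j \<omega>)"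
      using Xc_repr[OF w s, of j] Xc_repr[OF w t, of j] by simp
  qed
  also have "\<dots> = (\<Sum>k\<in>UNIV. \<Sum>k'\<in>UNIV. \<phi> s $ k * \<phi> t $ k' * (\<integral>\<omega>. D k j \<omega> * D k' j \<omega> \<partial>M))"
    by (rule int_sum_prod2) (auto intro: sqi_D)
  also have "\<dots> = (\<Sum>k\<in>UNIV. \<Sum>k'\<in>UNIV. \<phi> s $ k * \<phi> t $ k' * (Srow $ j $ j * Scol $ k $ k'))"
    by (simp add: cov_D)
  also have "\<dots> = Srow $ j $ j * (\<phi> s \<bullet> (Scol *v \<phi> t))"
    by (simp add: inner_vec_def matrix_vector_mult_def sum_distrib_left mult.commute mult.left_commute)
  finally show ?thesis using Srow_diag_pos[of j] by simp
qed

lemma Scol_sym: "Scol $ k $ k' = Scol $ k' $ k"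
proof -
  fix j :: 'p
  have "Srow $ j $ j * Scol $ k $ k' = (\<integral>\<omega>. D k j \<omega> * D k' j \<omega> \<partial>M)" by (simp add: cov_D)
  also have "\<dots> = (\<integral>\<omega>. D k' j \<omega> * D k j \<omega> \<partial>M)" by (simp add: mult.commute)
  also have "\<dots> = Srow $ j $ j * Scol $ k' $ k" by (simp add: cov_D)
  finally show ?thesis using Srow_diag_pos[of j] by simp
qed

lemma Scol_transpose: "transpose Scol = Scol"
  using Scol_sym by (simp add: transpose_def vec_eq_iff)

lemma quad_pairs: "0 \<le> (\<Sum>x\<in>UNIV. \<Sum>y\<in>UNIV. c x * c y * (Srow $ snd x $ snd y * Scol $ fst x $ fst y))"
proof -
  have "(\<Sum>x\<in>UNIV. \<Sum>y\<in>UNIV. c x * c y * (Srow $ snd x $ snd y * Scol $ fst x $ fst y))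
    = (\<Sum>x\<in>UNIV. \<Sum>y\<in>UNIV. c x * c y * (\<integral>\<omega>. D (fst x) (snd x) \<omega> * D (fst y) (snd y) \<omega> \<partial>M))"
    by (simp add: cov_D)
  also have "\<dots> = (\<integral>\<omega>. (\<Sum>x\<in>UNIV. c x * D (fst x) (snd x) \<omega>) * (\<Sum>y\<in>UNIV. c y * D (fst y) (snd y) \<omega>) \<partial>M)"
    by (rule int_sum_prod2[symmetric]) (auto intro: sqi_D)
  also have "0 \<le> \<dots>" by (rule Bochner_Integration.integral_nonneg) simp
  finally show ?thesis by simp
qed

lemma quad_single: "0 \<le> (\<Sum>k\<in>UNIV. \<Sum>k'\<in>UNIV. v k * v k' * Scol $ k $ k')"
proof -
  fix j :: 'p
  have "(\<Sum>k\<in>UNIV. \<Sum>k'\<in>UNIV. v k * v k' * (Srow $ j $ j * Scol $ k $ k'))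
    = (\<Sum>k\<in>UNIV. \<Sum>k'\<in>UNIV. v k * v k' * (\<integral>\<omega>. D k j \<omega> * D k' j \<omega> \<partial>M))"
    by (simp add: cov_D)
  also have "\<dots> = (\<integral>\<omega>. (\<Sum>k\<in>UNIV. v k * D k j \<omega>) * (\<Sum>k'\<in>UNIV. v k' * D k' j \<omega>) \<partial>M)"
    by (rule int_sum_prod2[symmetric]) (auto intro: sqi_D)
  also have "0 \<le> \<dots>" by (rule Bochner_Integration.integral_nonneg) simp
  finally have "0 \<le> Srow $ j $ j * (\<Sum>k\<in>UNIV. \<Sum>k'\<in>UNIV. v k * v k' * Scol $ k $ k')"
    by (simp add: sum_distrib_left mult.commute mult.left_commute)
  thus ?thesis using Srow_diag_pos[of j] by (simp add: zero_le_mult_iff)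
qed

lemma Scol_psd: "0 \<le> v \<bullet> (Scol *v v)"
proof -
  have "v \<bullet> (Scol *v v) = (\<Sum>k\<in>UNIV. \<Sum>k'\<in>UNIV. v$k * v$k' * Scol $ k $ k')"
    by (simp add: inner_vec_def matrix_vector_mult_def sum_distrib_left mult.commute mult.left_commute mult.assoc)
  thus ?thesis using quad_single[of "\<lambda>k. v $ k"] by simp
qed

lemma quad_mat: "0 \<le> (Scol ** G ** Srow) \<bullet> G"
proof -
  have "(Scol ** G ** Srow) \<bullet> G = (\<Sum>k\<in>UNIV. \<Sum>j\<in>UNIV. \<Sum>j'\<in>UNIV. \<Sum>k'\<in>UNIV. G$k$j * G$k'$j' * (Srow $ j' $ j * Scol $ k $ k'))"
    unfolding inner_mat_sum
    by (simp add: matrix_matrix_mult_def sum_distrib_left sum_distrib_right mult.commute mult.left_commute mult.assoc)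
  also have "\<dots> = (\<Sum>k\<in>UNIV. \<Sum>j\<in>UNIV. \<Sum>j'\<in>UNIV. \<Sum>k'\<in>UNIV. G$k$j * G$k'$j' * (Srow $ j $ j' * Scol $ k $ k'))"
    by (intro sum.cong refl, subst Srow_sym, rule refl)
  also have "\<dots> = (\<Sum>k\<in>UNIV. \<Sum>j\<in>UNIV. \<Sum>k'\<in>UNIV. \<Sum>j'\<in>UNIV. G$k$j * G$k'$j' * (Srow $ j $ j' * Scol $ k $ k'))"
    by (intro sum.cong refl sum.swap)
  also have "\<dots> = (\<Sum>x\<in>UNIV. \<Sum>y\<in>UNIV. G$fst x$snd x * G$fst y$snd y * (Srow $ snd x $ snd y * Scol $ fst x $ fst y))"
    by (simp only: sum_pair fst_conv snd_conv)
  finally show ?thesis using quad_pairs[of "\<lambda>x. G$fst x$snd x"] by simp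
qed

end


lemma ind_sq: "(indicator S t * (f t::real))\<^sup>2 = indicator S t * (f t)\<^sup>2"
  by (simp add: indicator_def power2_eq_square)

lemma sq_int_sqi: "sq_int S f \<longleftrightarrow> sqi lborel (\<lambda>t. indicator S t * f t)"
  unfolding sq_int_def sqi_def set_borel_measurable_def set_integrable_def
  by (simp add: ind_sq)

lemma set_ip: "(LINT t:S|lborel. f t * g t) = integral\<^sup>L lborel (\<lambda>t. (indicator S t * f t) * (indicator S t * (g t::real)))"
  unfolding set_lebesgue_integral_def
  by (rule Bochner_Integration.integral_cong) (auto simp: indicator_def)

context pts begin

definition Gm :: "(real \<Rightarrow> real^'p) \<Rightarrow> real^'p^'m" where
  "Gm x = (\<chi> k j. LINT t:{a..b}|lborel. \<phi> t $ k * x t $ j)"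

definition fn :: "real^'p^'m \<Rightarrow> real \<Rightarrow> real^'p" where
  "fn V t = transpose V *v \<phi> t"

definition Gphi :: "real^'m^'m" where
  "Gphi = (\<chi> k k'. LINT t:{a..b}|lborel. \<phi> t $ k * \<phi> t $ k')"

lemma sqi_phi: "sqi lborel (\<lambda>t. indicator {a..b} t * \<phi> t $ k)"
  using phi_L2 sq_int_sqi[of "{a..b}" "\<lambda>t. \<phi> t $ k"] by blast

lemma sqi_L2H: "L2H {a..b} x \<Longrightarrow> sqi lborel (\<lambda>t. indicator {a..b} t * x t $ j)"
  unfolding L2H_def using sq_int_sqi[of "{a..b}" "\<lambda>t. x t $ j"] by blast

lemma fn_comp: "fn V t $ j = (\<Sum>k\<in>UNIV. V$k$j * \<phi> t $ k)"
  unfolding fn_def by (simp add: matrix_vector_mult_def transpose_def)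

lemma ind_fn: "indicator {a..b} t * fn V t $ j = (\<Sum>k\<in>UNIV. V$k$j * (indicator {a..b} t * \<phi> t $ k))"
  by (simp add: fn_comp sum_distrib_left mult.left_commute)

lemma sqi_fn: "sqi lborel (\<lambda>t. indicator {a..b} t * fn V t $ j)"
  unfolding ind_fn by (rule sqi_lincomb) (auto intro: sqi_phi)

lemma L2H_fn: "L2H {a..b} (fn V)"
  unfolding L2H_def using sqi_fn sq_int_sqi by blast

lemma Hip_ind: "Hip {a..b} x y = (\<Sum>j\<in>UNIV. integral\<^sup>L lborel (\<lambda>t. (indicator {a..b} t * x t $ j) * (indicator {a..b} t * y t $ j)))"
  unfolding Hip_def by (simp add: set_ip)

lemma Gm_ind: "Gm x $ k $ j = integral\<^sup>L lborel (\<lambda>t. (indicator {a..b} t * \<phi> t $ k) * (indicator {a..b} t * x t $ j))"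
  unfolding Gm_def by (simp add: set_ip)

lemma Gphi_ind: "Gphi $ k $ k' = integral\<^sup>L lborel (\<lambda>t. (indicator {a..b} t * \<phi> t $ k) * (indicator {a..b} t * \<phi> t $ k'))"
  unfolding Gphi_def by (simp add: set_ip)

lemma Hip_fn: "L2H {a..b} x \<Longrightarrow> Hip {a..b} (fn V) x = V \<bullet> Gm x"
proof -
  assume x: "L2H {a..b} x"
  have "Hip {a..b} (fn V) x = (\<Sum>j\<in>UNIV. integral\<^sup>L lborel (\<lambda>t. (\<Sum>k\<in>UNIV. V$k$j * (indicator {a..b} t * \<phi> t $ k)) * (indicator {a..b} t * x t $ j)))"
    unfolding Hip_ind ind_fn ..
  also have "\<dots> = (\<Sum>j\<in>UNIV. \<Sum>k\<in>UNIV. V$k$j * Gm x $ k $ j)"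
    by (intro sum.cong refl, subst int_sum_prod) (auto intro: sqi_phi sqi_L2H[OF x] simp: Gm_ind)
  also have "\<dots> = V \<bullet> Gm x" unfolding inner_mat_sum by (rule sum.swap)
  finally show ?thesis .
qed

lemma Gm_fn: "Gm (fn V) = Gphi ** V"
proof -
  have "Gm (fn V) $ k $ j = (Gphi ** V) $ k $ j" for k j
  proof -
    have "Gm (fn V) $ k $ j = integral\<^sup>L lborel (\<lambda>t. (\<Sum>k'\<in>UNIV. V$k'$j * (indicator {a..b} t * \<phi> t $ k')) * (indicator {a..b} t * \<phi> t $ k))"
      unfolding Gm_ind ind_fn by (simp add: mult.commute)
    also have "\<dots> = (\<Sum>k'\<in>UNIV. V$k'$j * Gphi $ k' $ k)"
      by (subst int_sum_prod) (auto intro: sqi_phi simp: Gphi_ind)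
    also have "\<dots> = (\<Sum>k'\<in>UNIV. V$k'$j * Gphi $ k $ k')"
      by (simp add: Gphi_def mult.commute)
    also have "\<dots> = (Gphi ** V) $ k $ j"
      by (simp add: matrix_matrix_mult_def mult.commute)
    finally show ?thesis .
  qed
  thus ?thesis by (simp add: vec_eq_iff)
qed

lemma AE_ind_eq:
  fixes x x' :: "real \<Rightarrow> real^'q::finite"
  assumes "AE t in lborel. t \<in> {a..b} \<longrightarrow> x t = x' t"
  shows "AE t in lborel. indicator {a..b} t * x t $ j = indicator {a..b} t * x' t $ j"
  using assms by eventually_elim (simp add: indicator_def)

lemma Hip_cong_AE:
  assumes "L2H {a..b} x" "L2H {a..b} x'" "L2H {a..b} y" "AE t in lborel. t \<in> {a..b} \<longrightarrow> x t = x' t"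
  shows "Hip {a..b} x y = Hip {a..b} x' y"
  unfolding Hip_ind
proof (intro sum.cong refl Bochner_Integration.integral_cong_AE)
  fix j
  show "(\<lambda>t. indicator {a..b} t * x t $ j * (indicator {a..b} t * y t $ j)) \<in> borel_measurable lborel"
    using sqi_mult[OF sqi_L2H[OF assms(1)] sqi_L2H[OF assms(3)]] by (rule borel_measurable_integrable)
  show "(\<lambda>t. indicator {a..b} t * x' t $ j * (indicator {a..b} t * y t $ j)) \<in> borel_measurable lborel"
    using sqi_mult[OF sqi_L2H[OF assms(2)] sqi_L2H[OF assms(3)]] by (rule borel_measurable_integrable)
  show "AE t in lborel. indicator {a..b} t * x t $ j * (indicator {a..b} t * y t $ j) = indicator {a..b} t * x' t $ j * (indicator {a..b} t * y t $ j)"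
    using AE_ind_eq[OF assms(4), of j] by eventually_elim simp
qed

lemma Gm_cong_AE:
  assumes "L2H {a..b} x" "L2H {a..b} x'" "AE t in lborel. t \<in> {a..b} \<longrightarrow> x t = x' t"
  shows "Gm x = Gm x'"
proof -
  have "Gm x $ k $ j = Gm x' $ k $ j" for k j
    unfolding Gm_ind
  proof (intro Bochner_Integration.integral_cong_AE)
    show "(\<lambda>t. indicator {a..b} t * \<phi> t $ k * (indicator {a..b} t * x t $ j)) \<in> borel_measurable lborel"
      using sqi_mult[OF sqi_phi sqi_L2H[OF assms(1)]] by (rule borel_measurable_integrable)
    show "(\<lambda>t. indicator {a..b} t * \<phi> t $ k * (indicator {a..b} t * x' t $ j)) \<in> borel_measurable lborel"
      using sqi_mult[OF sqi_phi sqi_L2H[OF assms(2)]] by (rule borel_measurable_integrable)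
    show "AE t in lborel. indicator {a..b} t * \<phi> t $ k * (indicator {a..b} t * x t $ j) = indicator {a..b} t * \<phi> t $ k * (indicator {a..b} t * x' t $ j)"
      using AE_ind_eq[OF assms(3), of j] by eventually_elim simp
  qed
  thus ?thesis by (simp add: vec_eq_iff)
qed

lemma Hip_scale: "Hip {a..b} (\<lambda>t. c *\<^sub>R x t) y = c * Hip {a..b} x y"
  unfolding Hip_ind by (simp add: sum_distrib_left mult.assoc mult.left_commute)

lemma Hip_sym: "Hip {a..b} x y = Hip {a..b} y x"
  unfolding Hip_def by (simp add: mult.commute)

lemma Hip_cong: "(\<And>t. t \<in> {a..b} \<Longrightarrow> x t = x' t) \<Longrightarrow> Hip {a..b} x y = Hip {a..b} x' y"
  unfolding Hip_ind by (intro sum.cong refl Bochner_Integration.integral_cong) (auto simp: indicator_def)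

lemma fn_zero_AE:
  assumes "AE t in lborel. t \<in> {a..b} \<longrightarrow> fn V t = 0"
  shows "V = 0"
proof -
  have "V $ k $ j = 0" for k j
  proof -
    let ?c = "\<chi> k. V $ k $ j"
    have "AE t in lborel. t \<in> {a..b} \<longrightarrow> ?c \<bullet> \<phi> t = 0"
      using assms
    proof eventually_elim
      case (elim t)
      show ?case
      proof
        assume "t \<in> {a..b}"
        hence "fn V t $ j = 0" using elim by simp
        thus "?c \<bullet> \<phi> t = 0" by (simp add: fn_comp inner_vec_def)
      qed
    qed
    hence "?c = 0" using phi_indep unfolding L2_lin_indep_def by blast
    thus ?thesis by (metis vec_lambda_beta zero_index)
  qed
  thus ?thesis by (simp add: vec_eq_iff)
qed

lemma Gphi_sym: "transpose Gphi = Gphi"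
  by (simp add: Gphi_def transpose_def vec_eq_iff mult.commute)

lemma Gphi_pd: "sym_posdef Gphi"
  unfolding sym_posdef_def
proof (intro conjI allI impI Gphi_sym)
  fix v :: "real^'m" assume v: "v \<noteq> 0"
  let ?f = "\<lambda>t. \<Sum>k\<in>UNIV. v $ k * (indicator {a..b} t * \<phi> t $ k)"
  have sq: "sqi lborel ?f" by (rule sqi_lincomb) (auto intro: sqi_phi)
  have "v \<bullet> (Gphi *v v) = (\<Sum>k\<in>UNIV. \<Sum>k'\<in>UNIV. v $ k * v $ k' * Gphi $ k $ k')"
    by (simp add: inner_vec_def matrix_vector_mult_def sum_distrib_left mult.commute mult.left_commute mult.assoc)
  also have "\<dots> = integral\<^sup>L lborel (\<lambda>t. ?f t * ?f t)"
    unfolding Gphi_ind by (rule int_sum_prod2[symmetric]) (auto intro: sqi_phi)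
  finally have eq: "v \<bullet> (Gphi *v v) = integral\<^sup>L lborel (\<lambda>t. ?f t * ?f t)" .
  have nn: "0 \<le> integral\<^sup>L lborel (\<lambda>t. ?f t * ?f t)" by (rule Bochner_Integration.integral_nonneg) simp
  have nz: "integral\<^sup>L lborel (\<lambda>t. ?f t * ?f t) \<noteq> 0"
  proof
    assume z: "integral\<^sup>L lborel (\<lambda>t. ?f t * ?f t) = 0"
    have "AE t in lborel. ?f t * ?f t = 0"
      using z integral_nonneg_eq_0_iff_AE[of lborel "\<lambda>t. ?f t * ?f t"] sqi_mult[OF sq sq] by simp
    hence "AE t in lborel. t \<in> {a..b} \<longrightarrow> v \<bullet> \<phi> t = 0"
    proof eventually_elim
      case (elim t)
      show ?case
      proof
        assume t: "t \<in> {a..b}"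
        have "?f t = 0" using elim by simp
        thus "v \<bullet> \<phi> t = 0" using t by (simp add: inner_vec_def)
      qed
    qed
    hence "v = 0" using phi_indep unfolding L2_lin_indep_def by blast
    thus False using v by simp
  qed
  from nz have "0 \<noteq> integral\<^sup>L lborel (\<lambda>t. ?f t * ?f t)" by (rule not_sym)
  from order_le_neq_trans[OF nn this] show "0 < v \<bullet> (Gphi *v v)" unfolding eq .
qed

end


lemma inner_sym_mat:
  fixes S :: "real^'n^'n"
  assumes "transpose S = S"
  shows "x \<bullet> (S *v y) = y \<bullet> (S *v x)"
proof -
  have s: "S $ i $ j = S $ j $ i" for i j using assms by (metis transpose_def vec_lambda_beta)
  have "x \<bullet> (S *v y) = (\<Sum>i\<in>UNIV. \<Sum>j\<in>UNIV. x$i * S$i$j * y$j)"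
    by (simp add: inner_vec_def matrix_vector_mult_def sum_distrib_left mult.assoc)
  also have "\<dots> = (\<Sum>j\<in>UNIV. \<Sum>i\<in>UNIV. x$i * S$i$j * y$j)" by (rule sum.swap)
  also have "\<dots> = y \<bullet> (S *v x)"
    by (simp add: inner_vec_def matrix_vector_mult_def sum_distrib_left s mult.commute mult.left_commute)
  finally show ?thesis .
qed

lemma psd_zero:
  fixes S :: "real^'n^'n"
  assumes sym: "transpose S = S" and psd: "\<And>v. 0 \<le> v \<bullet> (S *v v)" and z: "v \<bullet> (S *v v) = 0"
  shows "S *v v = 0"
proof (rule ccontr)
  assume ne: "S *v v \<noteq> 0"
  define w where "w = S *v v"
  define n where "n = w \<bullet> w"
  define d where "d = w \<bullet> (S *v w)"
  have n: "0 < n" using ne unfolding n_def w_def by simp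
  have d: "0 \<le> d" unfolding d_def by (rule psd)
  have vw: "v \<bullet> (S *v w) = n" unfolding n_def using inner_sym_mat[OF sym, of v w] w_def by simp
  define l where "l = - n / (d + 1)"
  have "0 \<le> (v + l *\<^sub>R w) \<bullet> (S *v (v + l *\<^sub>R w))" by (rule psd)
  also have "\<dots> = v \<bullet> (S *v v) + l * (v \<bullet> (S *v w)) + l * (w \<bullet> (S *v v)) + l * l * d"
    unfolding d_def by (simp add: matrix_vector_right_distrib matrix_vector_mult_scaleR inner_add_left inner_add_right algebra_simps)
  also have "\<dots> = l * (2 * n + l * d)" using z vw unfolding n_def w_def by (simp add: algebra_simps)
  also have "\<dots> < 0"
  proof (rule mult_neg_pos)
    show "l < 0" unfolding l_def using n d by (simp add: divide_neg_pos)
    have dle: "d / (d + 1) \<le> 1" using d by simp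
    have "n * (d / (d + 1)) \<le> n * 1" by (rule mult_left_mono[OF dle]) (use n in simp)
    moreover have "l * d = - (n * (d / (d + 1)))" unfolding l_def by simp
    ultimately show "0 < 2 * n + l * d" using n by linarith
  qed
  finally show False by simp
qed

context pts begin

definition uvec :: "real \<Rightarrow> 'm \<Rightarrow> real" where
  "uvec s k' = (\<Sum>k\<in>UNIV. \<phi> s $ k * Scol $ k $ k')"

lemma uvec_inner: "\<phi> s \<bullet> (Scol *v w) = (\<Sum>k'\<in>UNIV. uvec s k' * w $ k')"
proof -
  have "\<phi> s \<bullet> (Scol *v w) = (\<Sum>k\<in>UNIV. \<Sum>k'\<in>UNIV. \<phi> s $ k * Scol $ k $ k' * w $ k')"
    by (simp add: inner_vec_def matrix_vector_mult_def sum_distrib_left mult.assoc)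
  also have "\<dots> = (\<Sum>k'\<in>UNIV. \<Sum>k\<in>UNIV. \<phi> s $ k * Scol $ k $ k' * w $ k')" by (rule sum.swap)
  also have "\<dots> = (\<Sum>k'\<in>UNIV. uvec s k' * w $ k')"
    by (simp add: uvec_def sum_distrib_right)
  finally show ?thesis .
qed

lemma kappa_u: "s \<in> {a..b} \<Longrightarrow> t \<in> {a..b} \<Longrightarrow> \<kappa> s t = (\<Sum>k'\<in>UNIV. uvec s k' * \<phi> t $ k')"
  using kappa_eq uvec_inner by metis

lemma Scol_invertible:
  assumes rk: "op_rank {a..b} (\<lambda>s t. Srow $ j $ j * \<kappa> s t) CARD('m)"
  shows "invertible Scol"
proof (rule ccontr)
  assume ninv: "\<not> invertible Scol"
  let ?m = "CARD('m)"
  let ?kk = "\<lambda>s t. Srow $ j $ j * \<kappa> s t"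
  obtain f where f: "\<forall>i<?m. sq_int {a..b} (f i)"
    and ind: "\<forall>c. (AE s in lborel. s \<in> {a..b} \<longrightarrow> (\<Sum>i<?m. c i * Kop {a..b} ?kk (f i) s) = 0) \<longrightarrow> (\<forall>i<?m. c i = 0)"
    using rk unfolding op_rank_def op_rank_ge_def by blast
  obtain h :: "nat \<Rightarrow> 'm" where h: "bij_betw h {0..<?m} UNIV"
    using ex_bij_betw_nat_finite[of "UNIV :: 'm set"] by auto
  define g where "g = inv_into {0..<?m} h"
  have gh: "i < ?m \<Longrightarrow> g (h i) = i" for i
    unfolding g_def using h by (simp add: bij_betw_def inv_into_f_f)
  have hg: "h (g k) = k" for k
    unfolding g_def using h by (simp add: bij_betw_def f_inv_into_f)
  have g_lt: "g k < ?m" for k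
    unfolding g_def using h by (metis atLeastLessThan_iff bij_betw_def inv_into_into UNIV_I)
  define H :: "real^'m^'m" where "H = (\<chi> k' k. LINT t:{a..b}|lborel. \<phi> t $ k' * f (g k) t)"
  have "\<not> invertible (Scol ** H)"
  proof
    assume "invertible (Scol ** H)"
    then obtain B where "(Scol ** H) ** B = mat 1" using invertible_right_inverse by blast
    hence "Scol ** (H ** B) = mat 1" by (simp add: matrix_mul_assoc)
    hence "invertible Scol" using invertible_right_inverse by blast
    thus False using ninv by simp
  qed
  then obtain c where c: "c \<noteq> 0" "(Scol ** H) *v c = 0"
    using matrix_left_invertible_ker[of "Scol ** H"] invertible_left_inverse[of "Scol ** H"] by blast
  define cn where "cn i = c $ h i" for i
  have Kop_eq: "Kop {a..b} ?kk (f i) s = Srow $ j $ j * (\<Sum>k'\<in>UNIV. uvec s k' * H $ k' $ h i)"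
    if i: "i < ?m" and s: "s \<in> {a..b}" for i s
  proof -
    have sqf: "sqi lborel (\<lambda>t. indicator {a..b} t * f i t)" using f i sq_int_sqi[of "{a..b}" "f i"] by blast
    have "Kop {a..b} ?kk (f i) s = (LINT t:{a..b}|lborel. (\<Sum>k'\<in>UNIV. (Srow $ j $ j * uvec s k') * \<phi> t $ k') * f i t)"
      unfolding Kop_def
      by (rule set_lebesgue_integral_cong) (auto simp: kappa_u[OF s] sum_distrib_left mult.assoc)
    also have "\<dots> = integral\<^sup>L lborel (\<lambda>t. (\<Sum>k'\<in>UNIV. (Srow $ j $ j * uvec s k') * (indicator {a..b} t * \<phi> t $ k')) * (indicator {a..b} t * f i t))"
      unfolding set_ip by (simp add: sum_distrib_left mult.left_commute)
    also have "\<dots> = (\<Sum>k'\<in>UNIV. (Srow $ j $ j * uvec s k') * integral\<^sup>L lborel (\<lambda>t. (indicator {a..b} t * \<phi> t $ k') * (indicator {a..b} t * f i t)))"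
      by (rule int_sum_prod) (auto intro: sqi_phi sqf)
    also have "\<dots> = (\<Sum>k'\<in>UNIV. (Srow $ j $ j * uvec s k') * H $ k' $ h i)"
      unfolding H_def by (simp add: gh[OF i] set_ip)
    finally show ?thesis by (simp add: sum_distrib_left mult.assoc)
  qed
  have "\<forall>s\<in>{a..b}. (\<Sum>i<?m. cn i * Kop {a..b} ?kk (f i) s) = 0"
  proof
    fix s assume s: "s \<in> {a..b}"
    have "(\<Sum>i<?m. cn i * Kop {a..b} ?kk (f i) s) = (\<Sum>i\<in>{0..<?m}. (\<lambda>k. c $ k * (Srow $ j $ j * (\<Sum>k'\<in>UNIV. uvec s k' * H $ k' $ k))) (h i))"
      unfolding cn_def
    proof (rule sum.cong)
      show "{..<?m} = {0..<?m}" by auto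
      fix i assume "i \<in> {0..<?m}"
      thus "c $ h i * Kop {a..b} ?kk (f i) s = (\<lambda>k. c $ k * (Srow $ j $ j * (\<Sum>k'\<in>UNIV. uvec s k' * H $ k' $ k))) (h i)"
        using Kop_eq[OF _ s, of i] by simp
    qed
    also have "\<dots> = (\<Sum>k\<in>UNIV. c $ k * (Srow $ j $ j * (\<Sum>k'\<in>UNIV. uvec s k' * H $ k' $ k)))"
      by (rule sum.reindex_bij_betw[OF h])
    also have "\<dots> = Srow $ j $ j * (\<Sum>k\<in>UNIV. \<Sum>k'\<in>UNIV. uvec s k' * (H $ k' $ k * c $ k))"
      by (simp add: sum_distrib_left mult.commute mult.left_commute)
    also have "\<dots> = Srow $ j $ j * (\<Sum>k'\<in>UNIV. \<Sum>k\<in>UNIV. uvec s k' * (H $ k' $ k * c $ k))"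
      by (subst sum.swap) (rule refl)
    also have "\<dots> = Srow $ j $ j * (\<Sum>k'\<in>UNIV. uvec s k' * (\<Sum>k\<in>UNIV. H $ k' $ k * c $ k))"
      by (simp add: sum_distrib_left)
    also have "\<dots> = Srow $ j $ j * (\<phi> s \<bullet> (Scol *v (H *v c)))"
      unfolding uvec_inner by (simp add: matrix_vector_mult_def)
    also have "\<dots> = 0" using c(2) by (simp add: matrix_vector_mul_assoc)
    finally show "(\<Sum>i<?m. cn i * Kop {a..b} ?kk (f i) s) = 0" .
  qed
  hence "AE s in lborel. s \<in> {a..b} \<longrightarrow> (\<Sum>i<?m. cn i * Kop {a..b} ?kk (f i) s) = 0" by auto
  hence "\<forall>i<?m. cn i = 0" using ind[THEN spec[where x=cn]] by (rule mp[rotated])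
  hence "c $ k = 0" for k using g_lt[of k] hg[of k] unfolding cn_def by (metis lessThan_iff)
  hence "c = 0" by (simp add: vec_eq_iff)
  thus False using c(1) by simp
qed

lemma Scol_pd:
  assumes "invertible Scol"
  shows "sym_posdef Scol"
  unfolding sym_posdef_def
proof (intro conjI allI impI Scol_transpose)
  fix v :: "real^'m" assume v: "v \<noteq> 0"
  have "v \<bullet> (Scol *v v) \<noteq> 0"
  proof
    assume "v \<bullet> (Scol *v v) = 0"
    hence "Scol *v v = 0" by (rule psd_zero[OF Scol_transpose Scol_psd])
    hence "Scol *v v = Scol *v 0" by simp
    hence "v = 0" using inj_matrix_vector_mult[OF assms] by (metis injD)
    thus False using v by simp
  qed
  thus "0 < v \<bullet> (Scol *v v)" using Scol_psd[of v] by simp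
qed

end


lemma isl: "integrable M f \<Longrightarrow> integral\<^sup>L M (\<lambda>x. f x *\<^sub>R c) = integral\<^sup>L M f *\<^sub>R (c::'a::{banach, second_countable_topology})"
  by (rule integral_scaleR_left) simp

context pts begin

definition colS :: "'p \<Rightarrow> real^'p" where "colS j = (\<chi> i. Srow $ i $ j)"

lemma Cop_integrand:
  assumes s: "s \<in> {a..b}" and t: "t \<in> {a..b}"
  shows "(\<kappa> s t *\<^sub>R Srow) *v x t = (\<Sum>k'\<in>UNIV. \<Sum>j\<in>UNIV. (\<phi> t $ k' * x t $ j) *\<^sub>R (uvec s k' *\<^sub>R colS j))"
proof -
  have "((\<kappa> s t *\<^sub>R Srow) *v x t) $ i = (\<Sum>k'\<in>UNIV. \<Sum>j\<in>UNIV. (\<phi> t $ k' * x t $ j) *\<^sub>R (uvec s k' *\<^sub>R colS j)) $ i" for i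
  proof -
    have "((\<kappa> s t *\<^sub>R Srow) *v x t) $ i = (\<Sum>j\<in>UNIV. (\<Sum>k'\<in>UNIV. uvec s k' * \<phi> t $ k') * Srow $ i $ j * x t $ j)"
      by (simp add: matrix_vector_mult_def kappa_u[OF s t])
    also have "\<dots> = (\<Sum>j\<in>UNIV. \<Sum>k'\<in>UNIV. \<phi> t $ k' * x t $ j * (uvec s k' * Srow $ i $ j))"
      by (simp add: sum_distrib_left sum_distrib_right mult.commute mult.left_commute)
    also have "\<dots> = (\<Sum>k'\<in>UNIV. \<Sum>j\<in>UNIV. \<phi> t $ k' * x t $ j * (uvec s k' * Srow $ i $ j))"
      by (rule sum.swap)
    also have "\<dots> = (\<Sum>k'\<in>UNIV. \<Sum>j\<in>UNIV. (\<phi> t $ k' * x t $ j) *\<^sub>R (uvec s k' *\<^sub>R colS j)) $ i"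
      by (simp add: vsum_nth colS_def mult.assoc)
    finally show ?thesis .
  qed
  thus ?thesis by (simp add: vec_eq_iff)
qed

lemma Cop_fn:
  assumes x: "L2H {a..b} x" and s: "s \<in> {a..b}"
  shows "Cop {a..b} (\<lambda>s t. \<kappa> s t *\<^sub>R Srow) x s = fn (Scol ** Gm x ** Srow) s"
proof -
  let ?I = "\<lambda>t. indicator {a..b} t :: real"
  have "Cop {a..b} (\<lambda>s t. \<kappa> s t *\<^sub>R Srow) x s = (LINT t:{a..b}|lborel. (\<Sum>k'\<in>UNIV. \<Sum>j\<in>UNIV. (\<phi> t $ k' * x t $ j) *\<^sub>R (uvec s k' *\<^sub>R colS j)))"
    unfolding Cop_def by (rule set_lebesgue_integral_cong) (auto simp: Cop_integrand[OF s])
  also have "\<dots> = integral\<^sup>L lborel (\<lambda>t. \<Sum>k'\<in>UNIV. \<Sum>j\<in>UNIV. ((?I t * \<phi> t $ k') * (?I t * x t $ j)) *\<^sub>R (uvec s k' *\<^sub>R colS j))"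
    unfolding set_lebesgue_integral_def
    by (rule Bochner_Integration.integral_cong) (auto simp: indicator_def scaleR_sum_right)
  also have "\<dots> = (\<Sum>k'\<in>UNIV. \<Sum>j\<in>UNIV. integral\<^sup>L lborel (\<lambda>t. ((?I t * \<phi> t $ k') * (?I t * x t $ j)) *\<^sub>R (uvec s k' *\<^sub>R colS j)))"
  proof -
    have int: "integrable lborel (\<lambda>t. ((?I t * \<phi> t $ k') * (?I t * x t $ j)) *\<^sub>R (uvec s k' *\<^sub>R colS j))" for k' j
      by (rule integrable_scaleR_left, rule sqi_mult[OF sqi_phi sqi_L2H[OF x]])
    have "integral\<^sup>L lborel (\<lambda>t. \<Sum>k'\<in>UNIV. \<Sum>j\<in>UNIV. ((?I t * \<phi> t $ k') * (?I t * x t $ j)) *\<^sub>R (uvec s k' *\<^sub>R colS j))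
       = (\<Sum>k'\<in>UNIV. integral\<^sup>L lborel (\<lambda>t. \<Sum>j\<in>UNIV. ((?I t * \<phi> t $ k') * (?I t * x t $ j)) *\<^sub>R (uvec s k' *\<^sub>R colS j)))"
      by (rule Bochner_Integration.integral_sum) (rule Bochner_Integration.integrable_sum, rule int)
    also have "\<dots> = (\<Sum>k'\<in>UNIV. \<Sum>j\<in>UNIV. integral\<^sup>L lborel (\<lambda>t. ((?I t * \<phi> t $ k') * (?I t * x t $ j)) *\<^sub>R (uvec s k' *\<^sub>R colS j)))"
      by (rule sum.cong[OF refl], rule Bochner_Integration.integral_sum, rule int)
    finally show ?thesis .
  qed
  also have "\<dots> = (\<Sum>k'\<in>UNIV. \<Sum>j\<in>UNIV. Gm x $ k' $ j *\<^sub>R (uvec s k' *\<^sub>R colS j))"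
    by (intro sum.cong refl, subst isl[OF sqi_mult[OF sqi_phi sqi_L2H[OF x]]], simp add: Gm_ind)
  also have "\<dots> = fn (Scol ** Gm x ** Srow) s"
  proof -
    have "(\<Sum>k'\<in>UNIV. \<Sum>j\<in>UNIV. Gm x $ k' $ j *\<^sub>R (uvec s k' *\<^sub>R colS j)) $ i = fn (Scol ** Gm x ** Srow) s $ i" for i
    proof -
      have "(\<Sum>k'\<in>UNIV. \<Sum>j\<in>UNIV. Gm x $ k' $ j *\<^sub>R (uvec s k' *\<^sub>R colS j)) $ i
          = (\<Sum>k'\<in>UNIV. \<Sum>j\<in>UNIV. \<Sum>k\<in>UNIV. \<phi> s $ k * Scol $ k $ k' * Gm x $ k' $ j * Srow $ j $ i)"
        by (simp add: vsum_nth colS_def uvec_def sum_distrib_left sum_distrib_right Srow_sym[of i] mult.commute mult.left_commute)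
      also have "\<dots> = (\<Sum>k'\<in>UNIV. \<Sum>k\<in>UNIV. \<Sum>j\<in>UNIV. \<phi> s $ k * Scol $ k $ k' * Gm x $ k' $ j * Srow $ j $ i)"
        by (intro sum.cong refl sum.swap)
      also have "\<dots> = (\<Sum>k\<in>UNIV. \<Sum>k'\<in>UNIV. \<Sum>j\<in>UNIV. \<phi> s $ k * Scol $ k $ k' * Gm x $ k' $ j * Srow $ j $ i)"
        by (rule sum.swap)
      also have "\<dots> = (\<Sum>k\<in>UNIV. \<Sum>j\<in>UNIV. \<Sum>k'\<in>UNIV. \<phi> s $ k * Scol $ k $ k' * Gm x $ k' $ j * Srow $ j $ i)"
        by (intro sum.cong refl sum.swap)
      also have "\<dots> = fn (Scol ** Gm x ** Srow) s $ i"
        by (simp add: fn_comp matrix_matrix_mult_def sum_distrib_left sum_distrib_right mult.commute mult.left_commute)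
      finally show ?thesis .
    qed
    thus ?thesis by (simp add: vec_eq_iff)
  qed
  finally show ?thesis .
qed

end


lemma cancel_mat:
  fixes P :: "real^'m^'m" and G :: "real^'p^'m" and Q :: "real^'p^'p"
  assumes "invertible P" "invertible Q" "P ** G ** Q = 0"
  shows "G = 0"
proof -
  have "G = (matrix_inv P ** P) ** G ** (Q ** matrix_inv Q)"
    using minv[OF assms(1)] minv[OF assms(2)] by (simp add: matrix_mul_lid matrix_mul_rid)
  also have "\<dots> = matrix_inv P ** (P ** G ** Q) ** matrix_inv Q" by (simp add: matrix_mul_assoc)
  also have "\<dots> = 0" using assms(3) by simp
  finally show ?thesis .
qed

lemma cancel_left:
  fixes P :: "real^'m^'m" and G :: "real^'p^'m"
  assumes "invertible P" "P ** G = 0"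
  shows "G = 0"
proof -
  have "G = (matrix_inv P ** P) ** G" using minv[OF assms(1)] by (simp add: matrix_mul_lid)
  also have "\<dots> = matrix_inv P ** (P ** G)" by (simp add: matrix_mul_assoc)
  also have "\<dots> = 0" using assms(2) by simp
  finally show ?thesis .
qed

context pts begin

lemma L2H_scale: "L2H {a..b} x \<Longrightarrow> L2H {a..b} (\<lambda>t. c *\<^sub>R x t)"
  unfolding L2H_def
proof
  fix j assume "\<forall>j. sq_int {a..b} (\<lambda>t. x t $ j)"
  hence "sqi lborel (\<lambda>t. indicator {a..b} t * x t $ j)" using sq_int_sqi[of "{a..b}" "\<lambda>t. x t $ j"] by blast
  hence "sqi lborel (\<lambda>t. c * (indicator {a..b} t * x t $ j))" by (rule sqi_cmult)
  hence "sqi lborel (\<lambda>t. indicator {a..b} t * (c *\<^sub>R x t) $ j)" by (simp add: mult.left_commute)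
  thus "sq_int {a..b} (\<lambda>t. (c *\<^sub>R x t) $ j)" using sq_int_sqi[of "{a..b}" "\<lambda>t. (c *\<^sub>R x t) $ j"] by blast
qed

lemma fn_scale: "fn (c *\<^sub>R V) t = c *\<^sub>R fn V t"
  by (simp add: vec_eq_iff fn_comp sum_distrib_left mult.assoc)

definition bt :: "real^'p^'m \<Rightarrow> real^'p^'m \<Rightarrow> real" where
  "bt U Z = U \<bullet> (Gphi ** Z)"

lemma bt_sym: "bt U Z = bt Z U"
  unfolding bt_def using frob_left[of Gphi Z U] Gphi_sym by (simp add: inner_commute)

lemma bt_sum_left: "bt (\<Sum>v\<in>S. c v *\<^sub>R f v) Z = (\<Sum>v\<in>S. c v * bt (f v) Z)"
  unfolding bt_def by (simp add: inner_sum_left)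

lemma bt_diff_left: "bt (U - U') Z = bt U Z - bt U' Z"
  unfolding bt_def by (simp add: inner_diff_left)

lemma bt_subspace: "subspace {x. bt R x = 0}"
  unfolding subspace_def bt_def
  by (auto simp: matrix_add_ldistrib inner_add_right matrix_scalar_ac scalar_matrix_assoc[symmetric])

lemma transpose_diff_mat: "transpose (P - Q) = transpose P - (transpose Q :: real^'m^'p)"
  by (simp add: vec_eq_iff transpose_def)

lemma mmd_inner:
  assumes "invertible Scol"
  shows "MMD2 MA Scol Srow C = (C - MA) \<bullet> (matrix_inv Scol ** (C - MA) ** matrix_inv Srow)"
proof -
  let ?B = "C - MA" and ?Sci = "matrix_inv Scol" and ?Sri = "matrix_inv Srow"
  have "MMD2 MA Scol Srow C = trace (?Sri ** (transpose ?B ** ?Sci ** ?B))"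
    unfolding MMD2_def by (simp add: matrix_mul_assoc)
  also have "\<dots> = trace ((transpose ?B ** ?Sci ** ?B) ** ?Sri)" by (rule trace_mul_sym)
  also have "\<dots> = trace (transpose ?B ** (?Sci ** ?B ** ?Sri))" by (simp add: matrix_mul_assoc)
  also have "\<dots> = ?B \<bullet> (?Sci ** ?B ** ?Sri)" by (rule frob_trace)
  finally show ?thesis .
qed

lemma fMMD_main:
  assumes inv: "invertible Scol"
    and eig: "eigsys {a..b} (\<lambda>s t. \<kappa> s t *\<^sub>R Srow) \<psi> \<pi>"
    and w: "\<omega> \<in> space M"
  shows "fMMD2 {a..b} \<psi> \<pi> (X \<omega>) \<mu> (CARD('m) * CARD('p)) = MMD2 MA Scol Srow (A \<omega>)"
proof -
  define N where "N = CARD('m) * CARD('p)"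
  have DIMN: "DIM(real^'p^'m) = N" unfolding N_def by simp
  have psiL2: "\<And>k. L2H {a..b} (\<psi> k)"
    and orth: "\<And>k l. Hip {a..b} (\<psi> k) (\<psi> l) = (if k = l then 1 else 0)"
    and eigen: "\<And>k. AE s in lborel. s \<in> {a..b} \<longrightarrow> Cop {a..b} (\<lambda>s t. \<kappa> s t *\<^sub>R Srow) (\<psi> k) s = \<pi> k *\<^sub>R \<psi> k s"
    and mono: "\<And>k l. k \<le> l \<Longrightarrow> \<pi> l \<le> \<pi> k"
    and compl: "\<And>x. L2H {a..b} x \<Longrightarrow> (\<forall>k. Hip {a..b} x (\<psi> k) = 0) \<Longrightarrow>
           (AE s in lborel. s \<in> {a..b} \<longrightarrow> Cop {a..b} (\<lambda>s t. \<kappa> s t *\<^sub>R Srow) x s = 0)"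
    using eig unfolding eigsys_def by auto
  have iSr: "invertible Srow" by (rule posdef_invertible[OF Srow_pd])
  have iG: "invertible Gphi" by (rule posdef_invertible[OF Gphi_pd])
  have E1: "AE s in lborel. s \<in> {a..b} \<longrightarrow> fn (Scol ** Gm (\<psi> k) ** Srow) s = \<pi> k *\<^sub>R \<psi> k s" for k
    using eigen[of k]
  proof eventually_elim
    case (elim s)
    show ?case
    proof
      assume s: "s \<in> {a..b}"
      thus "fn (Scol ** Gm (\<psi> k) ** Srow) s = \<pi> k *\<^sub>R \<psi> k s" using elim Cop_fn[OF psiL2 s] by simp
    qed
  qed
  have E2: "\<pi> k = (Scol ** Gm (\<psi> k) ** Srow) \<bullet> Gm (\<psi> k)" for k
  proof -
    have "\<pi> k = \<pi> k * Hip {a..b} (\<psi> k) (\<psi> k)" using orth[of k k] by simp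
    also have "\<dots> = Hip {a..b} (\<lambda>s. \<pi> k *\<^sub>R \<psi> k s) (\<psi> k)" by (simp add: Hip_scale)
    also have "\<dots> = Hip {a..b} (fn (Scol ** Gm (\<psi> k) ** Srow)) (\<psi> k)"
      by (rule Hip_cong_AE[symmetric, OF L2H_fn L2H_scale[OF psiL2] psiL2 E1])
    also have "\<dots> = (Scol ** Gm (\<psi> k) ** Srow) \<bullet> Gm (\<psi> k)" by (rule Hip_fn[OF psiL2])
    finally show ?thesis .
  qed
  have pi_nn: "0 \<le> \<pi> k" for k using E2[of k] quad_mat by simp
  have E3: "\<pi> l = 0 \<Longrightarrow> Gm (\<psi> l) = 0" for l
  proof -
    assume "\<pi> l = 0"
    hence "AE s in lborel. s \<in> {a..b} \<longrightarrow> fn (Scol ** Gm (\<psi> l) ** Srow) s = 0"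
      using E1[of l] by simp
    hence "Scol ** Gm (\<psi> l) ** Srow = 0" by (rule fn_zero_AE)
    thus ?thesis by (rule cancel_mat[OF inv iSr])
  qed
  have E4: "0 < \<pi> k" if kN: "k < N" for k
  proof (rule ccontr)
    assume "\<not> 0 < \<pi> k"
    hence pk: "\<pi> k \<le> 0" by simp
    have zero: "Gm (\<psi> l) = 0" if "k \<le> l" for l
      using mono[OF that] pk pi_nn[of l] E3[of l] by simp
    let ?S = "(\<lambda>l. Gm (\<psi> l)) ` {..<k}"
    have "dim ?S \<le> card ?S" by (rule dim_le_card[OF span_superset]) simp
    also have "\<dots> \<le> k" using card_image_le[of "{..<k}" "\<lambda>l. Gm (\<psi> l)"] by simp
    also have "\<dots> < DIM(real^'p^'m)" using kN DIMN by simp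
    finally have dl: "dim ?S < DIM(real^'p^'m)" .
    obtain U :: "real^'p^'m" where U: "U \<noteq> 0" "\<And>y. y \<in> span ?S \<Longrightarrow> orthogonal U y"
      using orthogonal_to_subspace_exists[OF dl] by metis
    have hip0: "\<forall>l. Hip {a..b} (fn U) (\<psi> l) = 0"
    proof
      fix l
      show "Hip {a..b} (fn U) (\<psi> l) = 0"
    proof (cases "l < k")
      case True
      hence "orthogonal U (Gm (\<psi> l))" by (intro U(2) span_base) auto
      thus ?thesis by (simp add: Hip_fn[OF psiL2] orthogonal_def)
    next
      case False
      thus ?thesis by (simp add: Hip_fn[OF psiL2] zero)
    qed
    qed
    have "AE s in lborel. s \<in> {a..b} \<longrightarrow> Cop {a..b} (\<lambda>s t. \<kappa> s t *\<^sub>R Srow) (fn U) s = 0"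
      by (rule compl[OF L2H_fn hip0])
    hence "AE s in lborel. s \<in> {a..b} \<longrightarrow> fn (Scol ** (Gphi ** U) ** Srow) s = 0"
    proof eventually_elim
      case (elim s)
      show ?case
      proof
        assume s: "s \<in> {a..b}"
        thus "fn (Scol ** (Gphi ** U) ** Srow) s = 0" using elim Cop_fn[OF L2H_fn s] by (simp add: Gm_fn)
      qed
    qed
    hence "Scol ** (Gphi ** U) ** Srow = 0" by (rule fn_zero_AE)
    hence "Gphi ** U = 0" by (rule cancel_mat[OF inv iSr])
    hence "U = 0" by (rule cancel_left[OF iG])
    thus False using U(1) by simp
  qed
  define V where "V k = (1 / \<pi> k) *\<^sub>R (Scol ** Gm (\<psi> k) ** Srow)" for k
  have E5a: "AE s in lborel. s \<in> {a..b} \<longrightarrow> \<psi> k s = fn (V k) s" if kN: "k < N" for k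
    using E1[of k]
  proof eventually_elim
    case (elim s)
    show ?case using elim E4[OF kN] by (auto simp: V_def fn_scale)
  qed
  have E5b: "Gm (\<psi> k) = Gphi ** V k" if kN: "k < N" for k
    using Gm_cong_AE[OF psiL2 L2H_fn E5a[OF kN]] Gm_fn by simp
  have E5c: "Scol ** (Gphi ** V k) ** Srow = \<pi> k *\<^sub>R V k" if kN: "k < N" for k
  proof -
    have "Scol ** (Gphi ** V k) ** Srow = Scol ** Gm (\<psi> k) ** Srow" by (simp add: E5b[OF kN])
    also have "\<dots> = \<pi> k *\<^sub>R V k" using E4[OF kN] by (simp add: V_def)
    finally show ?thesis .
  qed
  have E5d: "bt (V k) (V l) = (if k = l then 1 else 0)" if kN: "k < N" and lN: "l < N" for k l
  proof -
    have "Hip {a..b} (\<psi> k) (\<psi> l) = Hip {a..b} (fn (V k)) (\<psi> l)"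
      by (rule Hip_cong_AE[OF psiL2 L2H_fn psiL2 E5a[OF kN]])
    also have "\<dots> = bt (V k) (V l)" unfolding bt_def by (simp add: Hip_fn[OF psiL2] E5b[OF lN])
    finally show ?thesis using orth[of k l] by simp
  qed
  have injV: "inj_on V {..<N}"
  proof (rule inj_onI)
    fix k l assume k: "k \<in> {..<N}" and l: "l \<in> {..<N}" and e: "V k = V l"
    have "bt (V k) (V l) = 1" using E5d[of k k] k e by simp
    thus "k = l" using E5d[of k l] k l by (auto split: if_splits)
  qed
  let ?B = "V ` {..<N}"
  have indep: "independent ?B"
    unfolding independent_explicit
  proof (intro conjI allI impI ballI)
    show "finite ?B" by simp
    fix c assume c0: "(\<Sum>v\<in>?B. c v *\<^sub>R v) = 0"
    fix v assume "v \<in> ?B"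
    then obtain k0 where k0: "k0 < N" "v = V k0" by auto
    have "0 = bt (\<Sum>v\<in>?B. c v *\<^sub>R v) (V k0)" using c0 by (simp add: bt_def)
    also have "\<dots> = (\<Sum>v\<in>?B. c v * bt v (V k0))"
      using bt_sum_left[of c "\<lambda>v. v" ?B "V k0"] by simp
    also have "\<dots> = (\<Sum>k<N. c (V k) * bt (V k) (V k0))"
      by (simp add: sum.reindex[OF injV])
    also have "\<dots> = (\<Sum>k<N. if k = k0 then c (V k) else 0)"
      by (rule sum.cong) (auto simp: E5d k0)
    also have "\<dots> = c v" using k0 by simp
    finally show "c v = 0" by simp
  qed
  have spanB: "span ?B = UNIV"
  proof -
    have "dim (UNIV :: (real^'p^'m) set) \<le> card ?B"
      using card_image[OF injV] DIMN by (simp add: dim_UNIV)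
    hence "UNIV \<subseteq> span ?B" using card_ge_dim_independent[of ?B UNIV] indep by auto
    thus ?thesis by auto
  qed
  have parseval: "bt U Z = (\<Sum>k<N. bt U (V k) * bt (V k) Z)" for U Z
  proof -
    define R where "R = U - (\<Sum>k<N. bt U (V k) *\<^sub>R V k)"
    have btR: "bt R x = bt U x - (\<Sum>k<N. bt U (V k) * bt (V k) x)" for x
      unfolding R_def bt_diff_left using bt_sum_left[of "\<lambda>k. bt U (V k)" V "{..<N}" x] by simp
    have "bt R (V l) = 0" if lN: "l < N" for l
    proof -
      have "(\<Sum>k<N. bt U (V k) * bt (V k) (V l)) = (\<Sum>k<N. if k = l then bt U (V l) else 0)"
        by (rule sum.cong) (auto simp: E5d lN)
      thus ?thesis using lN by (simp add: btR)
    qed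
    hence "?B \<subseteq> {x. bt R x = 0}" by auto
    hence "span ?B \<subseteq> {x. bt R x = 0}" by (rule span_minimal[OF _ bt_subspace])
    hence "bt R Z = 0" using spanB by auto
    thus ?thesis using btR by simp
  qed
  define B where "B = A \<omega> - MA"
  have hipX: "Hip {a..b} (\<lambda>t. X \<omega> t - \<mu> t) (\<psi> k) = bt B (V k)" if kN: "k < N" for k
  proof -
    have "Hip {a..b} (\<lambda>t. X \<omega> t - \<mu> t) (\<psi> k) = Hip {a..b} (fn B) (\<psi> k)"
    proof (rule Hip_cong)
      fix t assume t: "t \<in> {a..b}"
      show "X \<omega> t - \<mu> t = fn B t"
        using X_def w t mu_eq[OF t]
        by (simp add: fn_def B_def transpose_diff_mat matrix_vector_mult_diff_rdistrib)
    qed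
    also have "\<dots> = bt B (V k)" unfolding bt_def by (simp add: Hip_fn[OF psiL2] E5b[OF kN])
    finally show ?thesis .
  qed
  define Y where "Y = matrix_inv Gphi ** matrix_inv Scol ** B ** matrix_inv Srow"
  have LY: "Scol ** Gphi ** Y ** Srow = B"
  proof -
    have "Scol ** Gphi ** Y ** Srow = (Scol ** (Gphi ** matrix_inv Gphi) ** matrix_inv Scol) ** B ** (matrix_inv Srow ** Srow)"
      unfolding Y_def by (simp add: matrix_mul_assoc)
    also have "\<dots> = B" using minv[OF inv] minv[OF iG] minv[OF iSr] by (simp add: matrix_mul_lid matrix_mul_rid)
    finally show ?thesis .
  qed
  have key: "bt B (V k) = \<pi> k * bt Y (V k)" if kN: "k < N" for k
  proof -
    have "bt B (V k) = (Scol ** Gphi ** Y ** Srow) \<bullet> (Gphi ** V k)" unfolding bt_def LY ..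
    also have "\<dots> = (Scol ** Gphi ** Y) \<bullet> ((Gphi ** V k) ** transpose Srow)" by (rule frob_right)
    also have "\<dots> = Y \<bullet> (transpose (Scol ** Gphi) ** ((Gphi ** V k) ** transpose Srow))" by (rule frob_left)
    also have "transpose (Scol ** Gphi) ** ((Gphi ** V k) ** transpose Srow) = Gphi ** (Scol ** (Gphi ** V k) ** Srow)"
      using Srow_pd Gphi_sym Scol_transpose unfolding sym_posdef_def
      by (simp add: matrix_transpose_mul matrix_mul_assoc)
    also have "\<dots> = \<pi> k *\<^sub>R (Gphi ** V k)" by (simp add: E5c[OF kN] matrix_scalar_ac scalar_matrix_assoc)
    finally show ?thesis unfolding bt_def by simp
  qed
  have "fMMD2 {a..b} \<psi> \<pi> (X \<omega>) \<mu> N = (\<Sum>k<N. inverse (\<pi> k) * (bt B (V k))\<^sup>2)"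
    unfolding fMMD2_def by (rule sum.cong) (auto simp: hipX)
  also have "\<dots> = (\<Sum>k<N. bt B (V k) * bt (V k) Y)"
  proof (rule sum.cong[OF refl])
    fix k assume "k \<in> {..<N}"
    hence kN: "k < N" by simp
    have "inverse (\<pi> k) * (bt B (V k))\<^sup>2 = bt B (V k) * (inverse (\<pi> k) * (\<pi> k * bt Y (V k)))"
      by (simp add: power2_eq_square key[OF kN])
    also have "\<dots> = bt B (V k) * bt (V k) Y" using E4[OF kN] by (simp add: bt_sym[of Y])
    finally show "inverse (\<pi> k) * (bt B (V k))\<^sup>2 = bt B (V k) * bt (V k) Y" .
  qed
  also have "\<dots> = bt B Y" by (rule parseval[symmetric])
  also have "\<dots> = B \<bullet> (matrix_inv Scol ** B ** matrix_inv Srow)"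
  proof -
    have "Gphi ** Y = (Gphi ** matrix_inv Gphi) ** matrix_inv Scol ** B ** matrix_inv Srow"
      unfolding Y_def by (simp add: matrix_mul_assoc)
    also have "\<dots> = matrix_inv Scol ** B ** matrix_inv Srow" using minv[OF iG] by (simp add: matrix_mul_lid)
    finally show ?thesis unfolding bt_def by simp
  qed
  also have "\<dots> = MMD2 MA Scol Srow (A \<omega>)" unfolding B_def by (rule mmd_inner[OF inv, symmetric])
  finally show ?thesis unfolding N_def .
qed

end


lemma sum_times: "(\<Sum>x\<in>A \<times> B. f x) = (\<Sum>a\<in>A. \<Sum>b\<in>B. f (a, b))"
  by (simp add: sum.cartesian_product)

lemma normal_rv_cong:
  assumes "normal_rv M Y m v" "\<And>\<omega>. \<omega> \<in> space M \<Longrightarrow> Y \<omega> = Y' \<omega>"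
  shows "normal_rv M Y' m v"
proof -
  have d: "distr M lborel Y = distr M lborel Y'" by (rule distr_cong) (auto simp: assms(2))
  have ms: "Y \<in> measurable M N \<longleftrightarrow> Y' \<in> measurable M N" for N by (rule measurable_cong) (simp add: assms(2))
  have ae: "(AE \<omega> in M. Y \<omega> = m) \<longleftrightarrow> (AE \<omega> in M. Y' \<omega> = m)"
    by (rule AE_cong) (simp add: assms(2))
  show ?thesis using assms(1) unfolding normal_rv_def distributed_def d ms ae by simp
qed

context pts begin

lemma MGP_A:
  assumes mgp: "is_MGP M {a..b} X \<mu> Srow \<kappa>"
  shows "matrix_normal M (\<lambda>\<omega> k j. A \<omega> $ k $ j) UNIV UNIV (\<lambda>k j. MA $ k $ j) (\<lambda>k k'. Scol $ k $ k') (\<lambda>j j'. Srow $ j $ j')"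
proof -
  have mn: "matrix_normal M (\<lambda>\<omega> i l. X \<omega> (tp l) $ i) UNIV {..<q} (\<lambda>i l. \<mu> (tp l) $ i)
          (\<lambda>i i'. Srow $ i $ i') (\<lambda>l l'. \<kappa> (tp l) (tp l'))"
    using mgp tp_in tp_mono unfolding is_MGP_def by blast
  show ?thesis
    unfolding matrix_normal_def gaussian_vec_def
  proof (intro allI)
    fix c :: "'m \<times> 'p \<Rightarrow> real"
    define d where "d = (\<lambda>(i, l). \<Sum>k\<in>UNIV. c (k, i) * W k l)"
    have dd: "d (i, l) = (\<Sum>k\<in>UNIV. c (k, i) * W k l)" for i l unfolding d_def by simp
    have nd: "normal_rv M (\<lambda>\<omega>. \<Sum>i\<in>UNIV. \<Sum>l<q. d (i, l) * X \<omega> (tp l) $ i)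
       (\<Sum>i\<in>UNIV. \<Sum>l<q. d (i, l) * \<mu> (tp l) $ i)
       (\<Sum>i\<in>UNIV. \<Sum>l<q. \<Sum>i'\<in>UNIV. \<Sum>l'<q. d (i, l) * d (i', l') * (\<kappa> (tp l) (tp l') * Srow $ i $ i'))"
      using mn[unfolded matrix_normal_def gaussian_vec_def, rule_format, of d]
      by (simp add: sum_times)
    have e1: "(\<Sum>i\<in>UNIV. \<Sum>l<q. d (i, l) * X \<omega> (tp l) $ i) = (\<Sum>k\<in>UNIV. \<Sum>j\<in>UNIV. c (k, j) * A \<omega> $ k $ j)"
      if w: "\<omega> \<in> space M" for \<omega>
    proof -
      have "(\<Sum>k\<in>UNIV. \<Sum>j\<in>UNIV. c (k, j) * A \<omega> $ k $ j) = (\<Sum>k\<in>UNIV. \<Sum>j\<in>UNIV. \<Sum>l<q. c (k, j) * W k l * X \<omega> (tp l) $ j)"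
        by (simp add: A_repr[OF w] sum_distrib_left mult.assoc)
      also have "\<dots> = (\<Sum>j\<in>UNIV. \<Sum>k\<in>UNIV. \<Sum>l<q. c (k, j) * W k l * X \<omega> (tp l) $ j)" by (rule sum.swap)
      also have "\<dots> = (\<Sum>j\<in>UNIV. \<Sum>l<q. \<Sum>k\<in>UNIV. c (k, j) * W k l * X \<omega> (tp l) $ j)" by (intro sum.cong refl sum.swap)
      also have "\<dots> = (\<Sum>i\<in>UNIV. \<Sum>l<q. d (i, l) * X \<omega> (tp l) $ i)" by (simp add: dd sum_distrib_right)
      finally show ?thesis by simp
    qed
    have e2: "(\<Sum>i\<in>UNIV. \<Sum>l<q. d (i, l) * \<mu> (tp l) $ i) = (\<Sum>k\<in>UNIV. \<Sum>j\<in>UNIV. c (k, j) * MA $ k $ j)"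
    proof -
      have "(\<Sum>k\<in>UNIV. \<Sum>j\<in>UNIV. c (k, j) * MA $ k $ j) = (\<Sum>k\<in>UNIV. \<Sum>j\<in>UNIV. \<Sum>l<q. c (k, j) * W k l * \<mu> (tp l) $ j)"
        by (simp add: MA_def sum_distrib_left mult.assoc)
      also have "\<dots> = (\<Sum>j\<in>UNIV. \<Sum>k\<in>UNIV. \<Sum>l<q. c (k, j) * W k l * \<mu> (tp l) $ j)" by (rule sum.swap)
      also have "\<dots> = (\<Sum>j\<in>UNIV. \<Sum>l<q. \<Sum>k\<in>UNIV. c (k, j) * W k l * \<mu> (tp l) $ j)" by (intro sum.cong refl sum.swap)
      also have "\<dots> = (\<Sum>i\<in>UNIV. \<Sum>l<q. d (i, l) * \<mu> (tp l) $ i)" by (simp add: dd sum_distrib_right)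
      finally show ?thesis by simp
    qed
    have L1: "(\<Sum>l<q. \<Sum>l'<q. d (i, l) * d (i', l') * \<kappa> (tp l) (tp l')) = (\<Sum>k\<in>UNIV. \<Sum>k'\<in>UNIV. c (k, i) * c (k', i') * Scol $ k $ k')" for i i'
    proof -
      have "(\<Sum>l<q. \<Sum>l'<q. d (i, l) * d (i', l') * \<kappa> (tp l) (tp l'))
          = (\<Sum>l<q. \<Sum>l'<q. \<Sum>k'\<in>UNIV. \<Sum>k\<in>UNIV. c (k, i) * c (k', i') * (W k l * W k' l' * \<kappa> (tp l) (tp l')))"
        by (simp add: dd sum_distrib_left sum_distrib_right mult.commute mult.left_commute)
      also have "\<dots> = (\<Sum>l<q. \<Sum>l'<q. \<Sum>k\<in>UNIV. \<Sum>k'\<in>UNIV. c (k, i) * c (k', i') * (W k l * W k' l' * \<kappa> (tp l) (tp l')))"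
        by (rule sum.cong[OF refl], rule sum.cong[OF refl], rule sum.swap)
      also have "\<dots> = (\<Sum>l<q. \<Sum>k\<in>UNIV. \<Sum>l'<q. \<Sum>k'\<in>UNIV. c (k, i) * c (k', i') * (W k l * W k' l' * \<kappa> (tp l) (tp l')))"
        by (intro sum.cong refl sum.swap)
      also have "\<dots> = (\<Sum>k\<in>UNIV. \<Sum>l<q. \<Sum>l'<q. \<Sum>k'\<in>UNIV. c (k, i) * c (k', i') * (W k l * W k' l' * \<kappa> (tp l) (tp l')))"
        by (rule sum.swap)
      also have "\<dots> = (\<Sum>k\<in>UNIV. \<Sum>l<q. \<Sum>k'\<in>UNIV. \<Sum>l'<q. c (k, i) * c (k', i') * (W k l * W k' l' * \<kappa> (tp l) (tp l')))"
        by (intro sum.cong refl sum.swap)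
      also have "\<dots> = (\<Sum>k\<in>UNIV. \<Sum>k'\<in>UNIV. \<Sum>l<q. \<Sum>l'<q. c (k, i) * c (k', i') * (W k l * W k' l' * \<kappa> (tp l) (tp l')))"
        by (intro sum.cong refl sum.swap)
      also have "\<dots> = (\<Sum>k\<in>UNIV. \<Sum>k'\<in>UNIV. c (k, i) * c (k', i') * Scol $ k $ k')"
        by (simp add: Scol_def sum_distrib_left)
      finally show ?thesis .
    qed
    have e3: "(\<Sum>i\<in>UNIV. \<Sum>l<q. \<Sum>i'\<in>UNIV. \<Sum>l'<q. d (i, l) * d (i', l') * (\<kappa> (tp l) (tp l') * Srow $ i $ i'))
       = (\<Sum>k\<in>UNIV. \<Sum>j\<in>UNIV. \<Sum>k'\<in>UNIV. \<Sum>j'\<in>UNIV. c (k, j) * c (k', j') * (Srow $ j $ j' * Scol $ k $ k'))"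
    proof -
      have "(\<Sum>i\<in>UNIV. \<Sum>l<q. \<Sum>i'\<in>UNIV. \<Sum>l'<q. d (i, l) * d (i', l') * (\<kappa> (tp l) (tp l') * Srow $ i $ i'))
          = (\<Sum>i\<in>UNIV. \<Sum>i'\<in>UNIV. \<Sum>l<q. \<Sum>l'<q. d (i, l) * d (i', l') * (\<kappa> (tp l) (tp l') * Srow $ i $ i'))"
        by (intro sum.cong refl sum.swap)
      also have "\<dots> = (\<Sum>i\<in>UNIV. \<Sum>i'\<in>UNIV. Srow $ i $ i' * (\<Sum>l<q. \<Sum>l'<q. d (i, l) * d (i', l') * \<kappa> (tp l) (tp l')))"
        by (simp add: sum_distrib_left mult.commute mult.left_commute)
      also have "\<dots> = (\<Sum>i\<in>UNIV. \<Sum>i'\<in>UNIV. \<Sum>k\<in>UNIV. \<Sum>k'\<in>UNIV. c (k, i) * c (k', i') * (Srow $ i $ i' * Scol $ k $ k'))"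
        unfolding L1 by (simp add: sum_distrib_left mult.commute mult.left_commute)
      also have "\<dots> = (\<Sum>i\<in>UNIV. \<Sum>k\<in>UNIV. \<Sum>i'\<in>UNIV. \<Sum>k'\<in>UNIV. c (k, i) * c (k', i') * (Srow $ i $ i' * Scol $ k $ k'))"
        by (rule sum.cong[OF refl], rule sum.swap)
      also have "\<dots> = (\<Sum>k\<in>UNIV. \<Sum>i\<in>UNIV. \<Sum>i'\<in>UNIV. \<Sum>k'\<in>UNIV. c (k, i) * c (k', i') * (Srow $ i $ i' * Scol $ k $ k'))"
        by (rule sum.swap)
      also have "\<dots> = (\<Sum>k\<in>UNIV. \<Sum>i\<in>UNIV. \<Sum>k'\<in>UNIV. \<Sum>i'\<in>UNIV. c (k, i) * c (k', i') * (Srow $ i $ i' * Scol $ k $ k'))"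
        by (rule sum.cong[OF refl], rule sum.cong[OF refl], rule sum.swap)
      finally show ?thesis .
    qed
    have "normal_rv M (\<lambda>\<omega>. \<Sum>k\<in>UNIV. \<Sum>j\<in>UNIV. c (k, j) * A \<omega> $ k $ j)
       (\<Sum>k\<in>UNIV. \<Sum>j\<in>UNIV. c (k, j) * MA $ k $ j)
       (\<Sum>k\<in>UNIV. \<Sum>j\<in>UNIV. \<Sum>k'\<in>UNIV. \<Sum>j'\<in>UNIV. c (k, j) * c (k', j') * (Srow $ j $ j' * Scol $ k $ k'))"
      using normal_rv_cong[OF nd e1] unfolding e2 e3 by simp
    thus "normal_rv M (\<lambda>\<omega>. \<Sum>i\<in>UNIV \<times> UNIV. c i * (case i of (i, j) \<Rightarrow> A \<omega> $ i $ j))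
        (\<Sum>i\<in>UNIV \<times> UNIV. c i * (case i of (i, j) \<Rightarrow> MA $ i $ j))
        (\<Sum>i\<in>UNIV \<times> UNIV. \<Sum>j\<in>UNIV \<times> UNIV. c i * c j * (case i of (i, j) \<Rightarrow> \<lambda>(i', j'). Srow $ j $ j' * Scol $ i $ i') j)"
      by (simp add: sum_pair)
  qed
qed

end

theorem theorem1:
  fixes M :: "'w measure"
    and a b :: real
    and \<phi> :: "real \<Rightarrow> real^'m::finite"
    and A :: "'w \<Rightarrow> real^'p::finite^'m"
    and X :: "'w \<Rightarrow> real \<Rightarrow> real^'p"
    and \<mu> :: "real \<Rightarrow> real^'p"
    and Srow :: "real^'p^'p"
    and \<kappa> :: "real \<Rightarrow> real \<Rightarrow> real"
  assumes "prob_space M"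
    and "a < b"
    and phi_L2: "\<forall>k. sq_int {a..b} (\<lambda>t. \<phi> t $ k)"
    and phi_indep: "L2_lin_indep {a..b} \<phi>"
    and A_rv: "\<forall>k j. (\<lambda>\<omega>. A \<omega> $ k $ j) \<in> borel_measurable M"
    and X_def: "\<forall>\<omega>\<in>space M. \<forall>t\<in>{a..b}. X \<omega> t = transpose (A \<omega>) *v \<phi> t"
    and X_L2: "\<forall>j. \<forall>t\<in>{a..b}. integrable M (\<lambda>\<omega>. (X \<omega> t $ j)\<^sup>2)"
    and mean: "\<forall>j. \<forall>t\<in>{a..b}. (\<integral>\<omega>. X \<omega> t $ j \<partial>M) = \<mu> t $ j"
    and Srow_pd: "sym_posdef Srow"
    and kappa_pd: "pd_kernel {a..b} \<kappa>"
    and cov: "\<forall>i j. \<forall>s\<in>{a..b}. \<forall>t\<in>{a..b}.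
               (\<integral>\<omega>. (X \<omega> s $ i - \<mu> s $ i) * (X \<omega> t $ j - \<mu> t $ j) \<partial>M) = Srow $ i $ j * \<kappa> s t"
    and rank: "\<forall>j. op_rank {a..b} (\<lambda>s t. Srow $ j $ j * \<kappa> s t) CARD('m)"
  shows "\<exists>(MA :: real^'p^'m) (Scol :: real^'m^'m).
     sym_posdef Scol \<and>
     (\<forall>k j. integrable M (\<lambda>\<omega>. (A \<omega> $ k $ j)\<^sup>2)) \<and>
     (\<forall>k j. (\<integral>\<omega>. A \<omega> $ k $ j \<partial>M) = MA $ k $ j) \<and>
     (\<forall>k j k' j'. (\<integral>\<omega>. (A \<omega> $ k $ j - MA $ k $ j) * (A \<omega> $ k' $ j' - MA $ k' $ j') \<partial>M)
                   = Srow $ j $ j' * Scol $ k $ k') \<and>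
     (\<forall>t\<in>{a..b}. transpose MA *v \<phi> t = \<mu> t) \<and>
     (\<forall>s\<in>{a..b}. \<forall>t\<in>{a..b}. \<phi> s \<bullet> (Scol *v \<phi> t) = \<kappa> s t) \<and>
     (\<forall>\<psi> \<pi>. eigsys {a..b} (\<lambda>s t. \<kappa> s t *\<^sub>R Srow) \<psi> \<pi> \<longrightarrow>
        (\<forall>\<omega>\<in>space M. fMMD2 {a..b} \<psi> \<pi> (X \<omega>) \<mu> (CARD('m) * CARD('p)) = MMD2 MA Scol Srow (A \<omega>))) \<and>
     (is_MGP M {a..b} X \<mu> Srow \<kappa> \<longrightarrow>
        matrix_normal M (\<lambda>\<omega> k j. A \<omega> $ k $ j) UNIV UNIV (\<lambda>k j. MA $ k $ j)
          (\<lambda>k k'. Scol $ k $ k') (\<lambda>j j'. Srow $ j $ j'))"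
  proof -
  have bs: "base M a b \<phi> A X \<mu> Srow \<kappa>"
    using assms(1-11) by (rule base.intro)
  interpret B: base M a b \<phi> A X \<mu> Srow \<kappa> by (rule bs)
  obtain q :: nat and tp :: "nat \<Rightarrow> real" and W :: "'m \<Rightarrow> nat \<Rightarrow> real"
    where q1: "\<forall>l<q. tp l \<in> {a..b}" and q2: "\<forall>l l'. l < l' \<and> l' < q \<longrightarrow> tp l < tp l'"
      and q3: "\<forall>k. (\<Sum>l<q. W k l *\<^sub>R \<phi> (tp l)) = axis k 1"
    using B.points by blast
  have ps: "pts M a b \<phi> A X \<mu> Srow \<kappa> q tp W"
    by (rule pts.intro[OF bs]) (unfold pts_axioms_def, intro conjI q1 q2 q3)
  interpret P: pts M a b \<phi> A X \<mu> Srow \<kappa> q tp W by (rule ps)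
  have inv: "invertible P.Scol" by (rule P.Scol_invertible[OF spec[OF rank]])
  have c1: "sym_posdef P.Scol" by (rule P.Scol_pd[OF inv])
  have c2: "\<forall>k j. integrable M (\<lambda>\<omega>. (A \<omega> $ k $ j)\<^sup>2)" using P.sqi_A unfolding sqi_def by blast
  have c3: "\<forall>k j. (\<integral>\<omega>. A \<omega> $ k $ j \<partial>M) = P.MA $ k $ j" using P.int_A by blast
  have c4: "\<forall>k j k' j'. (\<integral>\<omega>. (A \<omega> $ k $ j - P.MA $ k $ j) * (A \<omega> $ k' $ j' - P.MA $ k' $ j') \<partial>M)
                   = Srow $ j $ j' * P.Scol $ k $ k'" using P.cov_D unfolding P.D_def by blast
  have c5: "\<forall>t\<in>{a..b}. transpose P.MA *v \<phi> t = \<mu> t" using P.mu_eq by blast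
  have c6: "\<forall>s\<in>{a..b}. \<forall>t\<in>{a..b}. \<phi> s \<bullet> (P.Scol *v \<phi> t) = \<kappa> s t" using P.kappa_eq by blast
  have c7: "\<forall>\<psi> \<pi>. eigsys {a..b} (\<lambda>s t. \<kappa> s t *\<^sub>R Srow) \<psi> \<pi> \<longrightarrow>
        (\<forall>\<omega>\<in>space M. fMMD2 {a..b} \<psi> \<pi> (X \<omega>) \<mu> (CARD('m) * CARD('p)) = MMD2 P.MA P.Scol Srow (A \<omega>))"
    using P.fMMD_main[OF inv] by blast
  have c8: "is_MGP M {a..b} X \<mu> Srow \<kappa> \<longrightarrow>
        matrix_normal M (\<lambda>\<omega> k j. A \<omega> $ k $ j) UNIV UNIV (\<lambda>k j. P.MA $ k $ j)
          (\<lambda>k k'. P.Scol $ k $ k') (\<lambda>j j'. Srow $ j $ j')"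
    using P.MGP_A by blast
  show ?thesis
    by (rule exI[of _ P.MA], rule exI[of _ P.Scol]) (intro conjI c1 c2 c3 c4 c5 c6 c7 c8)
qed

end
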